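(* Let $k\ge 1$ be an integer and $\lambda\in[0,1]$. Define $\beta(k)=\sum_{i=0}^{k-1}\lambda^{-i}$ if $\lambda>0$ and $\beta(k)=\infty$ if $\lambda=0$, and \[ \alpha(k)=\begin{cases}1+2\lambda+2\lambda^2+\dots+2\lambda^{(k-1)/2} & \text{if } k \text{ is odd},\\ 1+2\lambda+2\lambda^2+\dots+2\lambda^{k/2-1}+\lambda^{k/2} & \text{if } k \text{ is even.}\end{cases} \] Then there exists a deterministic learning-augmented memory-constrained online algorithm $\mathcal{A}$ for the $k$-server problem on the line such that for every instance $I$ and every prediction for $I$ with prediction error $\eta$, \[ \mathcal{A}(I)\le \min\left\{\alpha(k)\left(1+\frac{\eta}{\mathrm{OPT}(I)}\right),\ \beta(k)\right\}\cdot \mathrm{OPT}(I)+c, \] where $c\ge 0$ depends only on the initial configuration. In particular, for $\lambda>0$ the algorithm is $\alpha(k)$-consistent and $\beta(k)$-robust.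
   Context: The $k$-server problem on the line: $k$ servers start at given positions on $\mathbb{R}$ (initial configuration $C_0$); requests $r_1,\dots,r_n\in\mathbb{R}$ arrive online one by one, and each must be served (before the next is revealed) by moving at least one server to the requested point; cost is the total distance traveled by all servers. Servers are labeled by position, $s_1\le\dots\le s_k$ (overtakings are uncrossed). $\mathrm{OPT}(I)$ is the minimum cost of serving instance $I$ offline. A prediction for an instance with $n$ requests is a sequence $p_1,\dots,p_n\in\{1,\dots,k\}$; $s_{p_t}$ is the predicted server for request $t$. The algorithm FtP ("follow the predictions") serves each request $r_t$ by moving server $s_{p_t}$ to it (then relabeling servers by position order); $\mathrm{FtP}(I)$ is its cost, and the prediction error is $\eta=\mathrm{FtP}(I)-\mathrm{OPT}(I)$. A learning-augmented algorithm receives $p_t$ together with $r_t$. It is $\alpha$-consistent if $\mathcal{A}(I)\le\alpha\,\mathrm{OPT}(I)+c$ for every instance and every prediction with $\eta=0$, and $\beta$-robust if $\mathcal{A}(I)\le\beta\,\mathrm{OPT}(I)+c$ for every instance and every prediction, where $c$ depends only on the initial configuration. An algorithm is memory-constrained if its decision on each request depends only on the current server configuration, the current request and the current prediction (not on previous requests); it may move several servers per request; and its memory is erasable: for any set of $k$ distinct points and any starting configuration there is a finite sequence of requests among these $k$ points after which each of these points holds exactly one server (such a sequence is called a force to these points). *)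

theory Defs
  imports Complex_Main
begin

text \<open>A configuration of k servers is the sorted list of their positions
  (servers labelled s_1 <= ... <= s_k by position; list index i-1 = label i).\<close>

definition valid_config :: "nat \<Rightarrow> real list \<Rightarrow> bool" where
  "valid_config k C \<longleftrightarrow> length C = k \<and> sorted C"

text \<open>Cost of moving from configuration C to configuration D, servers matched
  by position order (overtakings uncrossed).\<close>
definition move_cost :: "real list \<Rightarrow> real list \<Rightarrow> real" where
  "move_cost C D = (\<Sum>i<length C. \<bar>C ! i - D ! i\<bar>)"

text \<open>A prediction for requests rs: one predicted server label in {1..k} per request.\<close>
definition valid_prediction :: "nat \<Rightarrow> real list \<Rightarrow> nat list \<Rightarrow> bool" where
  "valid_prediction k rs ps \<longleftrightarrow> length ps = length rs \<and> (\<forall>p\<in>set ps. 1 \<le> p \<and> p \<le> k)"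

fun path_cost :: "real list \<Rightarrow> real list list \<Rightarrow> real" where
  "path_cost C [] = 0"
| "path_cost C (D # Ds) = move_cost C D + path_cost D Ds"

definition OPT :: "nat \<Rightarrow> real list \<Rightarrow> real list \<Rightarrow> real" where
  "OPT k C0 rs = Inf {path_cost C0 Ds | Ds. length Ds = length rs \<and>
      (\<forall>t<length rs. valid_config k (Ds ! t) \<and> rs ! t \<in> set (Ds ! t))}"

text \<open>Follow the predictions: move server s_p to the request, then relabel.\<close>
fun ftp_cost :: "real list \<Rightarrow> real list \<Rightarrow> nat list \<Rightarrow> real" where
  "ftp_cost C (r # rs) (p # ps) = \<bar>C ! (p - 1) - r\<bar> + ftp_cost (sort (C[p - 1 := r])) rs ps"
| "ftp_cost C _ _ = 0"

definition pred_error :: "nat \<Rightarrow> real list \<Rightarrow> real list \<Rightarrow> nat list \<Rightarrow> real" where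
  "pred_error k C0 rs ps = ftp_cost C0 rs ps - OPT k C0 rs"

text \<open>Such an algorithm is a map (current configuration, request, prediction)
  \<mapsto> new configuration.\<close>
type_synonym mc_alg = "real list \<Rightarrow> real \<Rightarrow> nat \<Rightarrow> real list"

fun alg_final :: "mc_alg \<Rightarrow> real list \<Rightarrow> real list \<Rightarrow> nat list \<Rightarrow> real list" where
  "alg_final A C (r # rs) (p # ps) = alg_final A (A C r p) rs ps"
| "alg_final A C _ _ = C"

fun alg_cost :: "mc_alg \<Rightarrow> real list \<Rightarrow> real list \<Rightarrow> nat list \<Rightarrow> real" where
  "alg_cost A C (r # rs) (p # ps) = move_cost C (A C r p) + alg_cost A (A C r p) rs ps"
| "alg_cost A C _ _ = 0"

definition serves :: "nat \<Rightarrow> mc_alg \<Rightarrow> bool" where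
  "serves k A \<longleftrightarrow> (\<forall>C r p. valid_config k C \<and> 1 \<le> p \<and> p \<le> k \<longrightarrow>
       valid_config k (A C r p) \<and> r \<in> set (A C r p))"

definition erasable :: "nat \<Rightarrow> mc_alg \<Rightarrow> bool" where
  "erasable k A \<longleftrightarrow> (\<forall>P C. finite P \<and> card P = k \<and> valid_config k C \<longrightarrow>
      (\<exists>rs ps. set rs \<subseteq> P \<and> valid_prediction k rs ps \<and>
               alg_final A C rs ps = sorted_list_of_set P))"

definition memory_constrained :: "nat \<Rightarrow> mc_alg \<Rightarrow> bool" where
  "memory_constrained k A \<longleftrightarrow> serves k A \<and> erasable k A"

definition alpha :: "real \<Rightarrow> nat \<Rightarrow> real" where
  "alpha lam k = (if odd k then 1 + 2 * (\<Sum>i=1..(k - 1) div 2. lam ^ i)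
                else 1 + 2 * (\<Sum>i=1..k div 2 - 1. lam ^ i) + lam ^ (k div 2))"

text \<open>beta for lambda > 0 (beta = infinity when lambda = 0 is handled in the bound).\<close>
definition beta :: "real \<Rightarrow> nat \<Rightarrow> real" where
  "beta lam k = (\<Sum>i<k. (1 / lam) ^ i)"

text \<open>min{alpha (1 + eta/OPT), beta} * OPT, multiplied out (OPT >= 0).\<close>
definition LA_bound :: "real \<Rightarrow> nat \<Rightarrow> real \<Rightarrow> real \<Rightarrow> real" where
  "LA_bound lam k opt eta = (if lam = 0 then alpha lam k * (opt + eta)
                          else min (alpha lam k * (opt + eta)) (beta lam k * opt))"

end

theory Submission
  imports Defs "HOL-Library.Multiset"
begin


definition S :: "real \<Rightarrow> nat \<Rightarrow> real" where
  "S mu n = (\<Sum>d=1..n. mu ^ d)"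

lemma S_0[simp]: "S mu 0 = 0" by (simp add: S_def)

lemma S_Suc: "S mu (Suc n) = S mu n + mu ^ Suc n"
  by (simp add: S_def)

lemma S_Suc': "S mu (Suc n) = mu * (1 + S mu n)"
proof (induction n)
  case 0 then show ?case by (simp add: S_def)
next
  case (Suc n)
  have "S mu (Suc (Suc n)) = S mu (Suc n) + mu^(Suc (Suc n))" by (rule S_Suc)
  also have "\<dots> = mu*(1 + S mu n) + mu * mu^(Suc n)" using Suc by simp
  also have "\<dots> = mu*(1 + S mu (Suc n))" by (simp add: S_Suc algebra_simps)
  finally show ?case .
qed

lemma S_add: "S mu (n + m) = S mu n + mu ^ n * S mu m"
  by (induction m) (auto simp: S_Suc algebra_simps power_add)

lemma S_nonneg: "0 \<le> mu \<Longrightarrow> 0 \<le> S mu n"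
  by (simp add: S_def sum_nonneg)

lemma S_mono: "0 \<le> mu \<Longrightarrow> n \<le> m \<Longrightarrow> S mu n \<le> S mu m"
  using S_add[of mu n "m - n"] S_nonneg[of mu "m-n"] by simp

lemma S_subadd: "0 \<le> mu \<Longrightarrow> mu \<le> 1 \<Longrightarrow> S mu (n + m) \<le> S mu n + S mu m"
proof -
  assume a: "0 \<le> mu" "mu \<le> 1"
  have "mu ^ n \<le> 1" using a by (simp add: power_le_one)
  then have "mu ^ n * S mu m \<le> S mu m" using S_nonneg[OF a(1)]
    by (simp add: mult_left_le_one_le a)
  then show ?thesis by (simp add: S_add)
qed

lemma S_superadd: "1 \<le> mu \<Longrightarrow> S mu n + S mu m \<le> S mu (n + m)"
proof -
  assume a: "1 \<le> mu"
  have "1 \<le> mu ^ n" using a by (simp add: one_le_power)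
  moreover have "0 \<le> S mu m" using S_nonneg[of mu m] a by simp
  ultimately have "1 * S mu m \<le> mu ^ n * S mu m" by (rule mult_right_mono)
  then show ?thesis by (simp add: S_add)
qed

text \<open>concavity: moving indices towards each other increases the sum\<close>
lemma S_concave:
  assumes "0 \<le> mu" "mu \<le> 1" "a \<le> c" "c \<le> b'" "a + b = c + b'"
  shows "S mu a + S mu b \<le> S mu c + S mu b'"
proof -
  have b: "b = b' + (c - a)" and c: "c = a + (c - a)" using assms by auto
  have "mu ^ b' \<le> mu ^ a" using assms by (simp add: power_decreasing)
  then have "mu ^ b' * S mu (c - a) \<le> mu ^ a * S mu (c - a)"
    by (simp add: mult_right_mono S_nonneg assms(1))
  moreover have "S mu b = S mu b' + mu^b' * S mu (c-a)"
    using S_add[of mu b' "c-a"] b by metis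
  moreover have "S mu c = S mu a + mu^a * S mu (c-a)"
    using S_add[of mu a "c-a"] c by metis
  ultimately show ?thesis by linarith
qed

lemma S_geom: "1 + S mu n = (\<Sum>i<Suc n. mu ^ i)"
proof (induction n)
  case 0 then show ?case by simp
next
  case (Suc n)
  have "1 + S mu (Suc n) = (1 + S mu n) + mu ^ Suc n" by (simp add: S_Suc)
  also have "\<dots> = (\<Sum>i<Suc (Suc n). mu ^ i)" using Suc by (simp only: sum.lessThan_Suc[of _ "Suc n"])
  finally show ?case .
qed

definition aw :: "real \<Rightarrow> nat \<Rightarrow> nat \<Rightarrow> real" where
  "aw mu k j = 1 + S mu j + S mu (k - 1 - j)"

definition ww :: "real \<Rightarrow> nat \<Rightarrow> nat \<Rightarrow> real" where
  "ww mu k j = S mu j - S mu (k - 1 - j)"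

lemma aw_nonneg: "0 \<le> mu \<Longrightarrow> 0 \<le> aw mu k j"
  by (simp add: aw_def add_nonneg_nonneg S_nonneg)

lemma aw_le_beta:
  assumes "0 < lam" "lam \<le> 1" "j < k"
  shows "aw (1/lam) k j \<le> beta lam k"
proof -
  have e: "j + (k - 1 - j) = k - 1" using assms by simp
  have l1: "1 \<le> 1/lam" using assms by simp
  have A: "S (1/lam) j + S (1/lam) (k - 1 - j) \<le> S (1/lam) (k - 1)"
    using S_superadd[OF l1, of j "k-1-j"] unfolding e .
  have sk: "Suc (k-1) = k" using assms by simp
  have "beta lam k = (\<Sum>i<Suc (k-1). (1 / lam) ^ i)" by (simp only: beta_def sk)
  also have "\<dots> = 1 + S (1/lam) (k - 1)" by (rule S_geom[symmetric])
  finally have B: "beta lam k = 1 + S (1/lam) (k - 1)" .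
  show ?thesis unfolding aw_def B using A by linarith
qed

lemma aw_le_alpha:
  assumes "0 \<le> lam" "lam \<le> 1" "j < k"
  shows "aw lam k j \<le> alpha lam k"
proof (cases "odd k")
  case True
  then obtain m where k: "k = 2*m+1" by (metis oddE)
  have al: "alpha lam k = 1 + 2 * S lam m" using True by (simp add: alpha_def S_def k)
  have "S lam j + S lam (k - 1 - j) \<le> S lam m + S lam m"
  proof (cases "j \<le> m")
    case True
    then show ?thesis using S_concave[of lam j m m "k-1-j"] assms k by simp
  next
    case False
    then have "k-1-j \<le> m" using k by simp
    then show ?thesis using S_concave[of lam "k-1-j" m m j] assms k by (simp add: add.commute)
  qed
  then show ?thesis by (simp add: aw_def al)
next
  case False
  then obtain m where k: "k = 2*m" by (metis evenE)
  have m: "m \<ge> 1" using assms k by simp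
  have "alpha lam k = 1 + 2 * S lam (m - 1) + lam ^ m" using False by (simp add: alpha_def S_def k)
  also have "\<dots> = 1 + S lam (m-1) + S lam m" using S_Suc[of lam "m-1"] m by simp
  finally have al: "alpha lam k = 1 + S lam (m-1) + S lam m" .
  have "S lam j + S lam (k - 1 - j) \<le> S lam (m-1) + S lam m"
  proof (cases "j \<le> m - 1")
    case True
    have e: "j + (k-1-j) = (m-1) + m" using k m True assms by simp
    have "m - 1 \<le> m" by simp
    from S_concave[OF assms(1,2) True this e] show ?thesis by linarith
  next
    case False
    then have a: "k-1-j \<le> m - 1" using k by simp
    have e: "(k-1-j) + j = (m-1) + m" using k m False assms by simp
    have "m - 1 \<le> m" by simp
    from S_concave[OF assms(1,2) a this e] show ?thesis by linarith
  qed
  then have "1 + (S lam j + S lam (k - 1 - j)) \<le> 1 + (S lam (m-1) + S lam m)" by (rule add_left_mono)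
  then show ?thesis by (simp only: aw_def al add.assoc)
qed

lemma aw_ge_min:
  assumes "0 \<le> mu" "mu \<le> 1" "j < k" "i < k"
  shows "1 + S mu i \<le> aw mu k j"
proof -
  have e: "j + (k-1-j) = k - 1" using assms by simp
  have "S mu (k - 1) \<le> S mu j + S mu (k - 1 - j)"
    using S_subadd[OF assms(1,2), of j "k-1-j"] unfolding e .
  moreover have "S mu i \<le> S mu (k - 1)" using S_mono[OF assms(1), of i "k-1"] assms by linarith
  ultimately show ?thesis unfolding aw_def by linarith
qed



definition ldc_mid :: "real \<Rightarrow> real list \<Rightarrow> real \<Rightarrow> nat \<Rightarrow> nat \<Rightarrow> real list" where
"ldc_mid lam X r p i = (
    if p \<le> Suc i then
      (let df = r - X!i; ds = X!(Suc i) - r; d = (if lam*df \<le> ds then df else ds/lam) in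
       X[i := X!i + d, Suc i := X!(Suc i) - lam*d])
    else
      (let df = X!(Suc i) - r; ds = r - X!i; d = (if lam*df \<le> ds then df else ds/lam) in
       X[i := X!i + lam*d, Suc i := X!(Suc i) - d]))"

definition ldc :: "real \<Rightarrow> mc_alg" where
"ldc lam X r p = (let k = length X in
  if r \<in> set X then X
  else if r < X!0 then X[0 := r]
  else if X!(k-1) < r then X[k-1 := r]
  else ldc_mid lam X r p (GREATEST m. m < k \<and> X!m < r))"

lemma upd_mem: "j < length X \<Longrightarrow> v \<in> set (X[j := v])"
  by (simp add: set_update_memI)

lemma upd2_mem:
  assumes "Suc i < length X"
  shows "u \<in> set (X[i := u, Suc i := v]) \<and> v \<in> set (X[i := u, Suc i := v])"
proof -
  have a: "X[i := u, Suc i := v] ! i = u" "X[i := u, Suc i := v] ! Suc i = v" using assms by auto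
  have "X[i := u, Suc i := v] ! i \<in> set (X[i := u, Suc i := v])" by (rule nth_mem) (use assms in simp)
  moreover have "X[i := u, Suc i := v] ! Suc i \<in> set (X[i := u, Suc i := v])" by (rule nth_mem) (use assms in simp)
  ultimately show ?thesis unfolding a by simp
qed

lemma step_d:
  fixes lam df ds d :: real
  assumes "0 \<le> lam" "0 < df" "0 < ds" "d = (if lam*df \<le> ds then df else ds/lam)"
  shows "0 < d \<and> d \<le> df \<and> lam*d \<le> ds \<and> (d = df \<or> lam*d = ds)"
proof (cases "lam*df \<le> ds")
  case True then show ?thesis using assms by auto
next
  case False
  then have l: "0 < lam" using assms by (cases "lam = 0") auto
  have "ds < lam * df" using False by simp
  then have "ds / lam < df" using l by (simp add: divide_less_eq mult.commute)
  then show ?thesis using False assms l by simp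
qed

lemma mid_index:
  assumes "sorted X" "length X = k" "r \<notin> set X" "\<not> r < X!0" "\<not> X!(k-1) < r"
    and "i = (GREATEST m. m < k \<and> X!m < r)" and k: "1 \<le> k"
  shows "Suc i < k \<and> X!i < r \<and> r < X!(Suc i)"
proof -
  have "0 < length X" using k assms by simp
  then have x0m: "X!0 \<in> set X" by (rule nth_mem)
  have "X!0 \<noteq> r"
  proof
    assume "X!0 = r" then show False using x0m assms(3) by simp
  qed
  then have x0: "X!0 < r" using assms by simp
  have P: "i < k \<and> X!i < r"
    unfolding assms(6) by (rule GreatestI_ex_nat[where b=k]) (use x0 k in \<open>auto intro!: exI[of _ 0]\<close>)
  have mx: "\<And>m. m < k \<Longrightarrow> X!m < r \<Longrightarrow> m \<le> i"
    unfolding assms(6) by (rule Greatest_le_nat[where b=k]) auto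
  have "i \<noteq> k - 1" using P assms(5) by auto
  then have si: "Suc i < k" using P by arith
  have "\<not> X!(Suc i) < r" using mx[of "Suc i"] si by auto
  moreover have "X!(Suc i) \<noteq> r" using assms(3) si assms(2) nth_mem[of "Suc i" X] by auto
  ultimately show ?thesis using si P by simp
qed

lemma sorted_upd1:
  assumes "sorted X" "j < length X" "0 < j \<Longrightarrow> X!(j-1) \<le> u" "Suc j < length X \<Longrightarrow> u \<le> X!(Suc j)"
  shows "sorted (X[j := u])"
  unfolding sorted_iff_nth_Suc
proof (intro allI impI)
  fix n assume n: "Suc n < length (X[j := u])"
  have s: "X!n \<le> X!(Suc n)" using assms(1) n by (simp add: sorted_iff_nth_Suc)
  show "X[j := u] ! n \<le> X[j := u] ! Suc n"
  proof (cases "n = j")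
    case True then show ?thesis using assms n by simp
  next
    case False
    show ?thesis
    proof (cases "Suc n = j")
      case True then show ?thesis using assms n False by (auto simp: nth_list_update)
    next
      case F2: False then show ?thesis using False s n by (simp add: nth_list_update)
    qed
  qed
qed

lemma sorted_upd2:
  assumes "sorted X" "Suc i < length X" "X!i \<le> u" "u \<le> v" "v \<le> X!(Suc i)"
  shows "sorted (X[i := u, Suc i := v])"
proof -
  have s1: "sorted (X[i := u])"
  proof (rule sorted_upd1)
    show "0 < i \<Longrightarrow> X ! (i - 1) \<le> u" using assms sorted_nth_mono[of X "i-1" i] by auto
    show "u \<le> X ! Suc i" using assms by simp
  qed (use assms in auto)
  show ?thesis
  proof (rule sorted_upd1[OF s1])
    show "0 < Suc i \<Longrightarrow> X[i := u] ! (Suc i - 1) \<le> v" using assms by simp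
    show "Suc (Suc i) < length (X[i := u]) \<Longrightarrow> v \<le> X[i := u] ! Suc (Suc i)"
      using assms sorted_nth_mono[of X "Suc i" "Suc (Suc i)"] by auto
  qed (use assms in auto)
qed

definition valid :: "nat \<Rightarrow> real list \<Rightarrow> bool" where
  "valid k X \<longleftrightarrow> length X = k \<and> sorted X"

lemma ldc_cases:
  assumes "0 \<le> lam" "sorted X" "length X = k" "1 \<le> k"
  obtains (C0) "r \<in> set X" "ldc lam X r p = X"
  | (C1) "r \<notin> set X" "r < X!0" "ldc lam X r p = X[0 := r]"
  | (C2) "r \<notin> set X" "X!(k-1) < r" "ldc lam X r p = X[k-1 := r]"
  | (C3) i d where "Suc i < k" "X!i < r" "r < X!(Suc i)" "p \<le> Suc i" "0 < d"
      "X!i + d \<le> r" "r \<le> X!(Suc i) - lam*d" "X!i + d = r \<or> X!(Suc i) - lam*d = r"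
      "ldc lam X r p = X[i := X!i + d, Suc i := X!(Suc i) - lam*d]"
  | (C4) i d where "Suc i < k" "X!i < r" "r < X!(Suc i)" "Suc i < p" "0 < d"
      "X!i + lam*d \<le> r" "r \<le> X!(Suc i) - d" "X!i + lam*d = r \<or> X!(Suc i) - d = r"
      "ldc lam X r p = X[i := X!i + lam*d, Suc i := X!(Suc i) - d]"
proof -
  consider (a) "r \<in> set X" | (b) "r \<notin> set X" "r < X!0" | (c) "r \<notin> set X" "\<not> r < X!0" "X!(k-1) < r"
    | (d) "r \<notin> set X" "\<not> r < X!0" "\<not> X!(k-1) < r" by blast
  then show ?thesis
  proof cases
    case a then show ?thesis using C0 by (simp add: ldc_def)
  next
    case b then show ?thesis using C1 by (simp add: ldc_def)
  next
    case c then show ?thesis using C2 assms by (simp add: ldc_def)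
  next
    case d
    define i where "i = (GREATEST m. m < k \<and> X!m < r)"
    have mi: "Suc i < k \<and> X!i < r \<and> r < X!(Suc i)"
      using mid_index[OF assms(2,3) d i_def assms(4)] .
    have lm: "ldc lam X r p = ldc_mid lam X r p i"
      using d assms by (simp add: ldc_def i_def Let_def)
    show ?thesis
    proof (cases "p \<le> Suc i")
      case True
      define df where "df = r - X!i"
      define ds where "ds = X!(Suc i) - r"
      define dd where "dd = (if lam*df \<le> ds then df else ds/lam)"
      have sd: "0 < dd \<and> dd \<le> df \<and> lam*dd \<le> ds \<and> (dd = df \<or> lam*dd = ds)"
        by (rule step_d) (use assms mi df_def ds_def dd_def in auto)
      have "ldc lam X r p = X[i := X!i + dd, Suc i := X!(Suc i) - lam*dd]"
        unfolding lm ldc_mid_def using True by (simp add: Let_def dd_def df_def ds_def)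
      then show ?thesis using C3[of i dd] mi True sd df_def ds_def by auto
    next
      case False
      define df where "df = X!(Suc i) - r"
      define ds where "ds = r - X!i"
      define dd where "dd = (if lam*df \<le> ds then df else ds/lam)"
      have sd: "0 < dd \<and> dd \<le> df \<and> lam*dd \<le> ds \<and> (dd = df \<or> lam*dd = ds)"
        by (rule step_d) (use assms mi df_def ds_def dd_def in auto)
      have "ldc lam X r p = X[i := X!i + lam*dd, Suc i := X!(Suc i) - dd]"
        unfolding lm ldc_mid_def using False by (simp add: Let_def dd_def df_def ds_def)
      then show ?thesis using C4[of i dd] mi False sd df_def ds_def by auto
    qed
  qed
qed

lemma ldc_valid:
  assumes "0 \<le> lam" "valid k X" "1 \<le> k"
  shows "valid k (ldc lam X r p) \<and> r \<in> set (ldc lam X r p)"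
proof -
  have s: "sorted X" and l: "length X = k" using assms by (auto simp: valid_def)
  show ?thesis
  proof (rule ldc_cases[OF assms(1) s l assms(3), of r p], goal_cases)
    case 1 then show ?thesis using assms by simp
  next
    case 2 note C1 = this
    have "sorted (X[0 := r])"
      by (rule sorted_upd1) (use s l assms C1 sorted_nth_mono[of X 0 1] in auto)
    then show ?thesis using C1 l assms upd_mem[of 0 X r] by (auto simp: valid_def)
  next
    case 3 note C2 = this
    have xx: "X!(k-1-1) \<le> X!(k-1)" using sorted_nth_mono[of X "k-1-1" "k-1"] s l assms by simp
    have "sorted (X[k-1 := r])"
      by (rule sorted_upd1) (use s l assms C2 xx in auto)
    then show ?thesis using C2 l assms upd_mem[of "k-1" X r] by (auto simp: valid_def)
  next
    case (4 i d) note C3 = this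
    have "sorted (X[i := X!i + d, Suc i := X!(Suc i) - lam*d])"
      by (rule sorted_upd2) (use s l C3 assms(1) in \<open>auto simp: mult_nonneg_nonneg\<close>)
    moreover have "r \<in> set (X[i := X!i + d, Suc i := X!(Suc i) - lam*d])"
      using C3(8) upd2_mem[of i X "X!i + d" "X!(Suc i) - lam*d"] C3(1) l by auto
    ultimately show ?thesis using C3 l by (simp add: valid_def)
  next
    case (5 i d) note C4 = this
    have "sorted (X[i := X!i + lam*d, Suc i := X!(Suc i) - d])"
      by (rule sorted_upd2) (use s l C4 assms(1) in \<open>auto simp: mult_nonneg_nonneg\<close>)
    moreover have "r \<in> set (X[i := X!i + lam*d, Suc i := X!(Suc i) - d])"
      using C4(8) upd2_mem[of i X "X!i + lam*d" "X!(Suc i) - d"] C4(1) l by auto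
    ultimately show ?thesis using C4 l by (simp add: valid_def)
  qed
qed



definition Psi :: "real \<Rightarrow> nat \<Rightarrow> real list \<Rightarrow> real" where
  "Psi mu k X = (\<Sum>j<k. ww mu k j * X!j)"

definition Mt :: "real \<Rightarrow> nat \<Rightarrow> real list \<Rightarrow> real list \<Rightarrow> real" where
  "Mt mu k X Y = (\<Sum>j<k. aw mu k j * \<bar>X!j - Y!j\<bar>)"

definition Phi :: "real \<Rightarrow> nat \<Rightarrow> real list \<Rightarrow> real list \<Rightarrow> real" where
  "Phi mu k X Y = Mt mu k X Y + Psi mu k X"

lemma sum_change1:
  fixes h g :: "nat \<Rightarrow> real"
  assumes "j < k" "\<And>m. m < k \<Longrightarrow> m \<noteq> j \<Longrightarrow> h m = g m"
  shows "(\<Sum>m<k. h m) = (\<Sum>m<k. g m) + (h j - g j)"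
proof -
  have "(\<Sum>m<k. h m) - (\<Sum>m<k. g m) = (\<Sum>m<k. h m - g m)" by (simp add: sum_subtractf)
  also have "\<dots> = (\<Sum>m<k. if m = j then h j - g j else 0)"
    by (rule sum.cong) (use assms in auto)
  also have "\<dots> = h j - g j" using assms by simp
  finally show ?thesis by simp
qed

lemma sum_change2:
  fixes h g :: "nat \<Rightarrow> real"
  assumes "i < k" "j < k" "i \<noteq> j" "\<And>m. m < k \<Longrightarrow> m \<noteq> i \<Longrightarrow> m \<noteq> j \<Longrightarrow> h m = g m"
  shows "(\<Sum>m<k. h m) = (\<Sum>m<k. g m) + (h i - g i) + (h j - g j)"
proof -
  have "(\<Sum>m<k. h m) - (\<Sum>m<k. g m) = (\<Sum>m<k. h m - g m)" by (simp add: sum_subtractf)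
  also have "\<dots> = (\<Sum>m<k. (if m = i then h i - g i else 0) + (if m = j then h j - g j else 0))"
    by (rule sum.cong) (use assms in auto)
  also have "\<dots> = (h i - g i) + (h j - g j)" using assms by (simp add: sum.distrib)
  finally show ?thesis by simp
qed

lemma mc_upd1:
  assumes "length X = k" "j < k"
  shows "move_cost X (X[j := v]) = \<bar>X!j - v\<bar>"
proof -
  have "move_cost X (X[j := v]) = (\<Sum>m<k. \<bar>X!m - X[j := v]!m\<bar>)" using assms by (simp add: move_cost_def)
  also have "\<dots> = (\<Sum>m<k. (0::real)) + (\<bar>X!j - X[j := v]!j\<bar> - 0)"
    by (rule sum_change1) (use assms in auto)
  finally show ?thesis using assms by simp
qed

lemma mc_upd2:
  assumes "length X = k" "Suc i < k"
  shows "move_cost X (X[i := u, Suc i := v]) = \<bar>X!i - u\<bar> + \<bar>X!(Suc i) - v\<bar>"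
proof -
  have "move_cost X (X[i := u, Suc i := v]) = (\<Sum>m<k. \<bar>X!m - X[i := u, Suc i := v]!m\<bar>)" using assms by (simp add: move_cost_def)
  also have "\<dots> = (\<Sum>m<k. (0::real)) + (\<bar>X!i - X[i := u, Suc i := v]!i\<bar> - 0) + (\<bar>X!(Suc i) - X[i := u, Suc i := v]!(Suc i)\<bar> - 0)"
    by (rule sum_change2) (use assms in auto)
  finally show ?thesis using assms by simp
qed

lemma Phi_upd1:
  assumes "length X = k" "j < k"
  shows "Phi mu k (X[j := v]) Y = Phi mu k X Y + aw mu k j * (\<bar>v - Y!j\<bar> - \<bar>X!j - Y!j\<bar>) + ww mu k j * (v - X!j)"
proof -
  have a: "Mt mu k (X[j := v]) Y = Mt mu k X Y + (aw mu k j * \<bar>X[j := v]!j - Y!j\<bar> - aw mu k j * \<bar>X!j - Y!j\<bar>)"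
    unfolding Mt_def by (rule sum_change1) (use assms in auto)
  have b: "Psi mu k (X[j := v]) = Psi mu k X + (ww mu k j * X[j := v]!j - ww mu k j * X!j)"
    unfolding Psi_def by (rule sum_change1) (use assms in auto)
  show ?thesis using a b assms by (simp add: Phi_def algebra_simps)
qed

lemma Phi_upd2:
  assumes "length X = k" "Suc i < k"
  shows "Phi mu k (X[i := u, Suc i := v]) Y = Phi mu k X Y
     + aw mu k i * (\<bar>u - Y!i\<bar> - \<bar>X!i - Y!i\<bar>) + ww mu k i * (u - X!i)
     + aw mu k (Suc i) * (\<bar>v - Y!(Suc i)\<bar> - \<bar>X!(Suc i) - Y!(Suc i)\<bar>) + ww mu k (Suc i) * (v - X!(Suc i))"
proof -
  let ?Z = "X[i := u, Suc i := v]"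
  have a: "Mt mu k ?Z Y = Mt mu k X Y + (aw mu k i * \<bar>?Z!i - Y!i\<bar> - aw mu k i * \<bar>X!i - Y!i\<bar>)
       + (aw mu k (Suc i) * \<bar>?Z!(Suc i) - Y!(Suc i)\<bar> - aw mu k (Suc i) * \<bar>X!(Suc i) - Y!(Suc i)\<bar>)"
    unfolding Mt_def by (rule sum_change2) (use assms in auto)
  have b: "Psi mu k ?Z = Psi mu k X + (ww mu k i * ?Z!i - ww mu k i * X!i)
      + (ww mu k (Suc i) * ?Z!(Suc i) - ww mu k (Suc i) * X!(Suc i))"
    unfolding Psi_def by (rule sum_change2) (use assms in auto)
  show ?thesis using a b assms by (simp add: Phi_def algebra_simps)
qed

lemma w_ident1:
  assumes "Suc i < k"
  shows "1 - aw mu k i + ww mu k i = - 2 * mu * (1 + S mu (k - 2 - i))"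
    and "1 + aw mu k (Suc i) - ww mu k (Suc i) = 2 * (1 + S mu (k - 2 - i))"
proof -
  have e: "k - 1 - i = Suc (k - 2 - i)" "k - 1 - Suc i = k - 2 - i" using assms by auto
  show "1 - aw mu k i + ww mu k i = - 2 * mu * (1 + S mu (k - 2 - i))"
    unfolding aw_def ww_def e S_Suc' by simp
  show "1 + aw mu k (Suc i) - ww mu k (Suc i) = 2 * (1 + S mu (k - 2 - i))"
    unfolding aw_def ww_def e by simp
qed

lemma w_ident2:
  assumes "Suc i < k"
  shows "1 + aw mu k i + ww mu k i = 2 * (1 + S mu i)"
    and "1 - aw mu k (Suc i) - ww mu k (Suc i) = - 2 * mu * (1 + S mu i)"
  unfolding aw_def ww_def S_Suc'[of mu i] by simp_all

lemma w_ident0: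
  assumes "1 \<le> k"
  shows "1 - aw mu k 0 - ww mu k 0 = 0" and "1 - aw mu k (k-1) + ww mu k (k-1) = 0"
  unfolding aw_def ww_def using assms by simp_all



lemma mid_left_bound:
  assumes "length X = k" "Suc i < k" "0 \<le> mu" "0 \<le> d1" "0 \<le> d2" "X!i + d1 \<le> r" "r \<le> X!(Suc i) - d2"
  shows mlb1: "r \<le> Y!i \<Longrightarrow> move_cost X (X[i := X!i + d1, Suc i := X!(Suc i) - d2])
           + Phi mu k (X[i := X!i + d1, Suc i := X!(Suc i) - d2]) Y
         \<le> Phi mu k X Y + 2*(1 + S mu (k-2-i))*(d2 - mu*d1)"
   and mlb2: "Y!(Suc i) \<le> r \<Longrightarrow> move_cost X (X[i := X!i + d1, Suc i := X!(Suc i) - d2])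
           + Phi mu k (X[i := X!i + d1, Suc i := X!(Suc i) - d2]) Y
         \<le> Phi mu k X Y + 2*(1 + S mu i)*(d1 - mu*d2)"
proof -
  let ?X' = "X[i := X!i + d1, Suc i := X!(Suc i) - d2]"
  let ?ai = "aw mu k i" and ?aj = "aw mu k (Suc i)" and ?wi = "ww mu k i" and ?wj = "ww mu k (Suc i)"
  let ?A = "\<bar>X!i + d1 - Y!i\<bar> - \<bar>X!i - Y!i\<bar>"
  let ?B = "\<bar>X!(Suc i) - d2 - Y!(Suc i)\<bar> - \<bar>X!(Suc i) - Y!(Suc i)\<bar>"
  have mc: "move_cost X ?X' = d1 + d2" using mc_upd2[OF assms(1,2)] assms by simp
  have P: "Phi mu k ?X' Y = Phi mu k X Y + ?ai * ?A + ?wi * d1 + ?aj * ?B + ?wj * (- d2)"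
    using Phi_upd2[OF assms(1,2), of mu "X!i + d1" "X!(Suc i) - d2" Y] by simp
  have ai: "0 \<le> ?ai" and aj: "0 \<le> ?aj" using aw_nonneg assms(3) by auto
  show "r \<le> Y!i \<Longrightarrow> move_cost X ?X' + Phi mu k ?X' Y \<le> Phi mu k X Y + 2*(1 + S mu (k-2-i))*(d2 - mu*d1)"
  proof -
    assume y: "r \<le> Y!i"
    have A0: "?A = - d1" using y assms by auto
    have A: "?ai * ?A = - (?ai * d1)" unfolding A0 by simp
    have "\<bar>(X!(Suc i) - Y!(Suc i)) - d2\<bar> \<le> \<bar>X!(Suc i) - Y!(Suc i)\<bar> + \<bar>d2\<bar>" by (rule abs_triangle_ineq4)
    then have "?B \<le> d2" using assms(5) by (simp add: algebra_simps)
    then have B: "?aj * ?B \<le> ?aj * d2" using aj by (rule mult_left_mono)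
    have I: "d1 + d2 + - (?ai * d1) + ?wi * d1 + ?aj * d2 + ?wj * (- d2)
        = d1 * (1 - ?ai + ?wi) + d2 * (1 + ?aj - ?wj)" by (simp add: algebra_simps)
    also have "\<dots> = 2*(1 + S mu (k-2-i))*(d2 - mu*d1)"
      unfolding w_ident1[OF assms(2)] by (simp add: algebra_simps)
    finally show ?thesis using mc P A B by linarith
  qed
  show "Y!(Suc i) \<le> r \<Longrightarrow> move_cost X ?X' + Phi mu k ?X' Y \<le> Phi mu k X Y + 2*(1 + S mu i)*(d1 - mu*d2)"
  proof -
    assume y: "Y!(Suc i) \<le> r"
    have B0: "?B = - d2" using y assms by auto
    have B: "?aj * ?B = - (?aj * d2)" unfolding B0 by simp
    have "\<bar>(X!i - Y!i) + d1\<bar> \<le> \<bar>X!i - Y!i\<bar> + \<bar>d1\<bar>" by (rule abs_triangle_ineq)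
    then have "?A \<le> d1" using assms(4) by (simp add: algebra_simps)
    then have A: "?ai * ?A \<le> ?ai * d1" using ai by (rule mult_left_mono)
    have I: "d1 + d2 + ?ai * d1 + ?wi * d1 + - (?aj * d2) + ?wj * (- d2)
        = d1 * (1 + ?ai + ?wi) + d2 * (1 - ?aj - ?wj)" by (simp add: algebra_simps)
    also have "\<dots> = 2*(1 + S mu i)*(d1 - mu*d2)"
      unfolding w_ident2[OF assms(2)] by (simp add: algebra_simps)
    finally show ?thesis using mc P A B by linarith
  qed
qed



lemma r_in_sorted:
  assumes "sorted Y" "length Y = k" "r \<in> set Y" "Suc i < k"
  shows "r \<le> Y!i \<or> Y!(Suc i) \<le> r"
proof -
  obtain q where q: "q < k" "Y!q = r" using assms by (auto simp: in_set_conv_nth)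
  show ?thesis
  proof (cases "q \<le> i")
    case True then have "Y!q \<le> Y!i" using assms by (intro sorted_nth_mono) auto
    then show ?thesis using q by simp
  next
    case False then have "Y!(Suc i) \<le> Y!q" using assms q by (intro sorted_nth_mono) auto
    then show ?thesis using q by simp
  qed
qed

lemma r_bounds:
  assumes "sorted Y" "length Y = k" "r \<in> set Y"
  shows "Y!0 \<le> r" "r \<le> Y!(k-1)"
proof -
  obtain q where q: "q < k" "Y!q = r" using assms by (auto simp: in_set_conv_nth)
  show "Y!0 \<le> r" using sorted_nth_mono[OF assms(1), of 0 q] q assms by simp
  show "r \<le> Y!(k-1)" using sorted_nth_mono[OF assms(1), of q "k-1"] q assms by simp
qed

lemma bound_left:
  assumes "length X = k" "1 \<le> k" "r < X!0" "Y!0 \<le> r"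
  shows "move_cost X (X[0 := r]) + Phi mu k (X[0 := r]) Y \<le> Phi mu k X Y"
proof -
  have k0: "0 < k" using assms by simp
  have mc: "move_cost X (X[0 := r]) = X!0 - r" using mc_upd1[OF assms(1) k0] assms by simp
  have P: "Phi mu k (X[0 := r]) Y = Phi mu k X Y + aw mu k 0 * (\<bar>r - Y!0\<bar> - \<bar>X!0 - Y!0\<bar>) + ww mu k 0 * (r - X!0)"
    by (rule Phi_upd1[OF assms(1) k0])
  have A: "\<bar>r - Y!0\<bar> - \<bar>X!0 - Y!0\<bar> = -(X!0 - r)" using assms by auto
  have "(X!0 - r) + aw mu k 0 * (-(X!0 - r)) + ww mu k 0 * (r - X!0) = (X!0 - r) * (1 - aw mu k 0 - ww mu k 0)"
    by (simp add: algebra_simps)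
  also have "\<dots> = 0" using w_ident0[OF assms(2)] by simp
  finally show ?thesis using mc P A by simp
qed

lemma bound_right:
  assumes "length X = k" "1 \<le> k" "X!(k-1) < r" "r \<le> Y!(k-1)"
  shows "move_cost X (X[k-1 := r]) + Phi mu k (X[k-1 := r]) Y \<le> Phi mu k X Y"
proof -
  have k0: "k - 1 < k" using assms by simp
  have mc: "move_cost X (X[k-1 := r]) = r - X!(k-1)" using mc_upd1[OF assms(1) k0] assms by simp
  have P: "Phi mu k (X[k-1 := r]) Y = Phi mu k X Y + aw mu k (k-1) * (\<bar>r - Y!(k-1)\<bar> - \<bar>X!(k-1) - Y!(k-1)\<bar>) + ww mu k (k-1) * (r - X!(k-1))"
    by (rule Phi_upd1[OF assms(1) k0])
  have A: "\<bar>r - Y!(k-1)\<bar> - \<bar>X!(k-1) - Y!(k-1)\<bar> = -(r - X!(k-1))" using assms by auto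
  have "(r - X!(k-1)) + aw mu k (k-1) * (-(r - X!(k-1))) + ww mu k (k-1) * (r - X!(k-1)) = (r - X!(k-1)) * (1 - aw mu k (k-1) + ww mu k (k-1))"
    by (simp add: algebra_simps)
  also have "\<dots> = 0" using w_ident0[OF assms(2)] by simp
  finally show ?thesis using mc P A by simp
qed

lemma robust_step:
  assumes lam: "0 < lam" "lam \<le> 1" and X: "valid k X" and Y: "valid k Y" "r \<in> set Y" and k: "1 \<le> k"
  shows "move_cost X (ldc lam X r p) + Phi (1/lam) k (ldc lam X r p) Y \<le> Phi (1/lam) k X Y"
proof -
  have s: "sorted X" "length X = k" using X by (auto simp: valid_def)
  have sy: "sorted Y" "length Y = k" using Y by (auto simp: valid_def)
  have mu: "0 \<le> 1/lam" using lam by simp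
  have il: "lam \<le> 1/lam" using lam by (simp add: le_divide_eq power2_eq_square mult_le_one)
  show ?thesis
  proof (rule ldc_cases[OF less_imp_le[OF lam(1)] s k, of r p], goal_cases)
    case 1 then show ?case by (simp add: move_cost_def)
  next
    case 2 then show ?case using bound_left[OF s(2) k, of r Y] r_bounds[OF sy Y(2)] by simp
  next
    case 3 then show ?case using bound_right[OF s(2) k, of r Y] r_bounds[OF sy Y(2)] by simp
  next
    case (4 i d)
    have d: "0 \<le> d" "0 \<le> lam * d" using 4 lam by auto
    have S0: "0 \<le> 1 + S (1/lam) (k-2-i)" "0 \<le> 1 + S (1/lam) i" using S_nonneg[OF mu] by (auto intro: add_nonneg_nonneg)
    consider "r \<le> Y!i" | "Y!(Suc i) \<le> r" using r_in_sorted[OF sy Y(2) 4(1)] by blast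
    then show ?case
    proof cases
      case 1
      have "lam * d \<le> (1/lam) * d" by (rule mult_right_mono[OF il]) (use d in auto)
      then have "lam * d - 1/lam * d \<le> 0" by simp
      then have "2*(1 + S (1/lam) (k-2-i))*(lam*d - 1/lam*d) \<le> 0"
        using S0 by (simp add: mult_nonneg_nonpos)
      then show ?thesis using mlb1[OF s(2) 4(1) mu d 4(6) 4(7) 1] 4(9) by simp
    next
      case 2
      have "d - 1/lam * (lam * d) = 0" using lam by simp
      then show ?thesis using mlb2[OF s(2) 4(1) mu d 4(6) 4(7) 2] 4(9) by simp
    qed
  next
    case (5 i d)
    have d: "0 \<le> lam * d" "0 \<le> d" using 5 lam by auto
    have S0: "0 \<le> 1 + S (1/lam) (k-2-i)" "0 \<le> 1 + S (1/lam) i" using S_nonneg[OF mu] by (auto intro: add_nonneg_nonneg)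
    consider "r \<le> Y!i" | "Y!(Suc i) \<le> r" using r_in_sorted[OF sy Y(2) 5(1)] by blast
    then show ?case
    proof cases
      case 1
      have "d - 1/lam * (lam * d) = 0" using lam by simp
      then show ?thesis using mlb1[OF s(2) 5(1) mu d 5(6) 5(7) 1] 5(9) by simp
    next
      case 2
      have "lam * d \<le> (1/lam) * d" by (rule mult_right_mono[OF il]) (use d in auto)
      then have "lam * d - 1/lam * d \<le> 0" by simp
      then have "2*(1 + S (1/lam) i)*(lam*d - 1/lam*d) \<le> 0"
        using S0 by (simp add: mult_nonneg_nonpos)
      then show ?thesis using mlb2[OF s(2) 5(1) mu d 5(6) 5(7) 2] 5(9) by simp
    qed
  qed
qed



lemma valid_iff: "valid k X = valid_config k X"
  by (simp add: valid_def valid_config_def)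

lemma Psi_nonneg:
  assumes "0 \<le> mu" "sorted X" "length X = k"
  shows "0 \<le> Psi mu k X"
proof -
  define f where "f j = S mu j * (X!j - X!(k-1-j))" for j
  have rf: "(\<Sum>j<k. f (k - Suc j)) = (\<Sum>j<k. f j)" by (rule sum.nat_diff_reindex)
  have "Psi mu k X = (\<Sum>j<k. S mu j * X!j) - (\<Sum>j<k. S mu (k-1-j) * X!j)"
    by (simp add: Psi_def ww_def algebra_simps sum_subtractf)
  also have "(\<Sum>j<k. S mu (k-1-j) * X!j) = (\<Sum>j<k. S mu j * X!(k-1-j))"
  proof -
    have "(\<Sum>j<k. S mu (k-1-j) * X!j) = (\<Sum>j<k. (\<lambda>j. S mu (k-1-j) * X!j) (k - Suc j))"
      by (rule sum.nat_diff_reindex[symmetric])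
    also have "\<dots> = (\<Sum>j<k. S mu j * X!(k-1-j))" by (rule sum.cong) auto
    finally show ?thesis .
  qed
  finally have P1: "Psi mu k X = (\<Sum>j<k. f j)" by (simp add: f_def sum_subtractf algebra_simps)
  have "2 * Psi mu k X = (\<Sum>j<k. f j) + (\<Sum>j<k. f (k - Suc j))" using P1 rf by simp
  also have "\<dots> = (\<Sum>j<k. f j + f (k - Suc j))" by (simp add: sum.distrib)
  also have "\<dots> = (\<Sum>j<k. (S mu j - S mu (k-1-j)) * (X!j - X!(k-1-j)))"
  proof (rule sum.cong)
    fix j assume "j \<in> {..<k}"
    then have e: "k - Suc (k - Suc j) = j" by auto
    show "f j + f (k - Suc j) = (S mu j - S mu (k-1-j)) * (X!j - X!(k-1-j))"
      unfolding f_def by (simp add: e algebra_simps)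
  qed simp
  also have "\<dots> \<ge> 0"
  proof (rule sum_nonneg)
    fix j assume j: "j \<in> {..<k}"
    show "0 \<le> (S mu j - S mu (k-1-j)) * (X!j - X!(k-1-j))"
    proof (cases "j \<le> k-1-j")
      case True
      have "S mu j \<le> S mu (k-1-j)" by (rule S_mono[OF assms(1) True])
      moreover have "X!j \<le> X!(k-1-j)" using sorted_nth_mono[OF assms(2) True] j assms by auto
      ultimately show ?thesis by (simp add: mult_nonpos_nonpos)
    next
      case False
      then have F: "k-1-j \<le> j" by simp
      have "S mu (k-1-j) \<le> S mu j" by (rule S_mono[OF assms(1) F])
      moreover have "X!(k-1-j) \<le> X!j" using sorted_nth_mono[OF assms(2) F] j assms by auto
      ultimately show ?thesis by simp
    qed
  qed
  finally show ?thesis by simp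
qed

lemma Mt_nonneg: "0 \<le> mu \<Longrightarrow> 0 \<le> Mt mu k X Y"
  unfolding Mt_def by (intro sum_nonneg mult_nonneg_nonneg aw_nonneg) auto

lemma Phi_nonneg: "0 \<le> mu \<Longrightarrow> sorted X \<Longrightarrow> length X = k \<Longrightarrow> 0 \<le> Phi mu k X Y"
  unfolding Phi_def using Mt_nonneg Psi_nonneg by (simp add: add_nonneg_nonneg)

lemma Phi_self: "Phi mu k X X = Psi mu k X"
  by (simp add: Phi_def Mt_def)

lemma adv_step:
  assumes "length Y = k" "\<And>j. j < k \<Longrightarrow> 0 \<le> aw mu k j \<and> aw mu k j \<le> B"
  shows "Phi mu k X D \<le> Phi mu k X Y + B * move_cost Y D"
proof -
  have "Mt mu k X D - Mt mu k X Y = (\<Sum>j<k. aw mu k j * (\<bar>X!j - D!j\<bar> - \<bar>X!j - Y!j\<bar>))"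
    by (simp add: Mt_def sum_subtractf algebra_simps)
  also have "\<dots> \<le> (\<Sum>j<k. B * \<bar>Y!j - D!j\<bar>)"
  proof (rule sum_mono)
    fix j assume j: "j \<in> {..<k}"
    have t: "\<bar>X!j - D!j\<bar> - \<bar>X!j - Y!j\<bar> \<le> \<bar>Y!j - D!j\<bar>" by linarith
    have "aw mu k j * (\<bar>X!j - D!j\<bar> - \<bar>X!j - Y!j\<bar>) \<le> aw mu k j * \<bar>Y!j - D!j\<bar>"
      using mult_left_mono[OF t] assms(2) j by auto
    also have "\<dots> \<le> B * \<bar>Y!j - D!j\<bar>"
      using mult_right_mono[of "aw mu k j" B "\<bar>Y!j - D!j\<bar>"] assms(2)[of j] j by auto
    finally show "aw mu k j * (\<bar>X!j - D!j\<bar> - \<bar>X!j - Y!j\<bar>) \<le> B * \<bar>Y!j - D!j\<bar>" .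
  qed
  also have "\<dots> = B * move_cost Y D" using assms(1) by (simp add: move_cost_def sum_distrib_left)
  finally show ?thesis by (simp add: Phi_def)
qed

lemma path_cost_nonneg: "0 \<le> path_cost C Ds"
  by (induction Ds arbitrary: C) (auto simp: move_cost_def intro!: add_nonneg_nonneg sum_nonneg)

lemma robust_run:
  assumes lam: "0 < lam" "lam \<le> 1" and k: "1 \<le> k"
  shows "valid k X \<Longrightarrow> valid k Y \<Longrightarrow> length Ds = length rs \<Longrightarrow>
    (\<forall>t<length rs. valid_config k (Ds!t) \<and> rs!t \<in> set (Ds!t)) \<Longrightarrow>
    alg_cost (ldc lam) X rs ps \<le> beta lam k * path_cost Y Ds + Phi (1/lam) k X Y"
proof (induction rs arbitrary: X Y Ds ps)
  case Nil
  then show ?case using Phi_nonneg[of "1/lam" X k Y] lam by (simp add: valid_def)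
next
  case (Cons r rs)
  obtain D Ds' where Ds: "Ds = D # Ds'" using Cons.prems(3) by (cases Ds) auto
  have pc0: "0 \<le> path_cost Y Ds" by (rule path_cost_nonneg)
  have b0: "0 \<le> beta lam k" unfolding beta_def using lam by (intro sum_nonneg) auto
  show ?case
  proof (cases ps)
    case Nil
    then show ?thesis using Phi_nonneg[of "1/lam" X k Y] lam Cons.prems pc0 b0
      by (simp add: valid_def)
  next
    case (Cons p ps')
    let ?X' = "ldc lam X r p"
    have vD: "valid k D" "r \<in> set D" using Cons.prems(4) Ds by (auto simp: valid_iff)
    have vX': "valid k ?X'" using ldc_valid[OF less_imp_le[OF lam(1)] Cons.prems(1) k] by simp
    have IH: "alg_cost (ldc lam) ?X' rs ps' \<le> beta lam k * path_cost D Ds' + Phi (1/lam) k ?X' D"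
      by (rule Cons.IH[OF vX' vD(1)]) (use Cons.prems(3,4) Ds in auto)
    have st: "move_cost X ?X' + Phi (1/lam) k ?X' D \<le> Phi (1/lam) k X D"
      by (rule robust_step[OF lam Cons.prems(1) vD k])
    have ad: "Phi (1/lam) k X D \<le> Phi (1/lam) k X Y + beta lam k * move_cost Y D"
      by (rule adv_step) (use Cons.prems(2) aw_le_beta[OF lam] aw_nonneg lam in \<open>auto simp: valid_def\<close>)
    show ?thesis using IH st ad \<open>ps = p # ps'\<close> Ds by (simp add: algebra_simps)
  qed
qed



lemma core_scalar:
  fixes x y y' r d K a C al :: real
  assumes "y \<le> y'" "y' < r" "0 \<le> d" "x + d \<le> r" "K \<le> a" "K + a \<le> C" "0 \<le> C" "0 \<le> a" "a \<le> al"
  shows "K*d + a*(\<bar>x + d - y'\<bar> - \<bar>x - y\<bar>) \<le> al*(y' - y) + C*(r - y')"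
proof -
  have yy: "0 \<le> y' - y" using assms by simp
  have ay: "a*(y' - y) \<le> al*(y' - y)" using mult_right_mono[OF assms(9) yy] .
  consider (c1) "y' \<le> x" | (c2) "x < y'" "d \<le> y' - x" | (c3) "x < y'" "y' - x < d" by linarith
  then show ?thesis
  proof cases
    case c1
    have D: "\<bar>x + d - y'\<bar> - \<bar>x - y\<bar> = d - (y' - y)" using c1 assms by auto
    have "(K + a) * d \<le> C * d" using mult_right_mono[OF assms(6,3)] .
    moreover have "C * d \<le> C * (r - y')" using mult_left_mono[OF _ assms(7), of d "r - y'"] c1 assms by linarith
    moreover have "0 \<le> a * (y' - y)" using assms yy by simp
    moreover have "K*d + a*(d - (y' - y)) = (K + a) * d - a*(y' - y)" by (simp add: algebra_simps)
    ultimately show ?thesis unfolding D using ay yy assms by (smt (verit) mult_nonneg_nonneg)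
  next
    case c2
    have "\<bar>x + d - y'\<bar> = y' - x - d" using c2 by auto
    moreover have "y - x \<le> \<bar>x - y\<bar>" by simp
    ultimately have "\<bar>x + d - y'\<bar> - \<bar>x - y\<bar> \<le> (y' - y) - d" by linarith
    then have A: "a*(\<bar>x + d - y'\<bar> - \<bar>x - y\<bar>) \<le> a*((y' - y) - d)" using mult_left_mono assms(8) by blast
    have "(K - a) * d \<le> 0" using assms by (simp add: mult_nonpos_nonneg)
    moreover have "K*d + a*((y' - y) - d) = (K - a) * d + a*(y' - y)" by (simp add: algebra_simps)
    moreover have "0 \<le> C*(r - y')" using assms by simp
    ultimately show ?thesis using A ay by linarith
  next
    case c3
    define e where "e = y' - x"
    have e0: "0 \<le> e" using c3 e_def by simp
    have "\<bar>x + d - y'\<bar> = d - e" using c3 e_def by auto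
    moreover have "y - x \<le> \<bar>x - y\<bar>" by simp
    ultimately have "\<bar>x + d - y'\<bar> - \<bar>x - y\<bar> \<le> d - 2*e + (y' - y)" using e_def by linarith
    then have A: "a*(\<bar>x + d - y'\<bar> - \<bar>x - y\<bar>) \<le> a*(d - 2*e + (y' - y))" using mult_left_mono assms(8) by blast
    have de: "0 \<le> d - e" using c3 e_def by simp
    have "(K + a) * (d - e) \<le> C * (d - e)" using mult_right_mono[OF assms(6) de] .
    moreover have "C * (d - e) \<le> C * (r - y')" using mult_left_mono[OF _ assms(7), of "d - e" "r - y'"] e_def assms by linarith
    moreover have "(K - a) * e \<le> 0" using assms e0 by (simp add: mult_nonpos_nonneg)
    moreover have "K*d + a*(d - 2*e + (y' - y)) = (K + a) * (d - e) + (K - a) * e + a*(y' - y)" by (simp add: algebra_simps)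
    ultimately show ?thesis using A ay by linarith
  qed
qed

lemma tele:
  fixes f g :: "nat \<Rightarrow> real"
  assumes "a \<le> b" "b < k"
    and "\<And>j. j < k \<Longrightarrow> f j = (if a \<le> j \<and> j < b then g (Suc j) - g j else if j = b then c - g b else 0)"
  shows "(\<Sum>j<k. f j) = c - g a"
proof -
  have "(\<Sum>j<k. f j) = (\<Sum>j<k. (if j \<in> {a..<b} then g (Suc j) - g j else 0) + (if j = b then c - g b else 0))"
    by (rule sum.cong) (use assms in auto)
  also have "\<dots> = (\<Sum>j<k. (if j \<in> {a..<b} then g (Suc j) - g j else 0)) + (c - g b)"
    using assms by (simp add: sum.distrib)
  also have "(\<Sum>j<k. (if j \<in> {a..<b} then g (Suc j) - g j else 0)) = (\<Sum>j\<in>{..<k} \<inter> {a..<b}. g (Suc j) - g j)"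
    by (rule sum.inter_restrict[symmetric]) simp
  also have "{..<k} \<inter> {a..<b} = {a..<b}" using assms by auto
  also have "(\<Sum>j\<in>{a..<b}. g (Suc j) - g j) = g b - g a" by (rule sum_Suc_diff'[OF assms(1)])
  finally show ?thesis by simp
qed



lemma C_bound:
  assumes "0 \<le> lam" "lam \<le> 1" "j < k" "i < k"
  shows "2*(1 + S lam i) \<le> alpha lam k + aw lam k j"
proof -
  have "1 + S lam i \<le> aw lam k j" by (rule aw_ge_min) (use assms in auto)
  moreover have "1 + S lam i \<le> aw lam k 0" by (rule aw_ge_min) (use assms in auto)
  moreover have "aw lam k 0 \<le> alpha lam k" by (rule aw_le_alpha) (use assms in auto)
  ultimately have "1 + S lam i \<le> aw lam k j" "1 + S lam i \<le> alpha lam k" by linarith+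
  then show ?thesis by (simp add: algebra_simps)
qed

lemma bad_left:
  fixes X X' Y Y' :: "real list"
  assumes len: "length X = k" "length Y = k"
    and idx: "Suc i < k" "p0 \<le> i" "i < q" "q < k"
    and lam: "0 \<le> lam" "lam \<le> 1" and d0: "0 \<le> d"
    and xs: "sorted X"
    and xi: "X'!i = X!i + d" "X'!(Suc i) = X!(Suc i) - lam*d" "\<And>j. j<k \<Longrightarrow> j \<noteq> i \<Longrightarrow> j \<noteq> Suc i \<Longrightarrow> X'!j = X!j"
    and bnd: "X!i + d \<le> r" "r \<le> X!(Suc i) - lam*d"
    and ys: "sorted Y" "Y!q < r"
    and Y': "\<And>j. j<k \<Longrightarrow> Y'!j = (if j < p0 then Y!j else if j < q then Y!(Suc j) else if j = q then r else Y!j)"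
  shows "(1+lam)*d + Phi lam k X' Y' \<le> Phi lam k X Y + alpha lam k * (r - Y!p0)"
proof -
  define al where "al = alpha lam k"
  define l where "l j = Y'!j - Y!j" for j
  define C where "C = 2*(1 + S lam i)"
  have ysm: "\<And>a b. a \<le> b \<Longrightarrow> b < k \<Longrightarrow> Y!a \<le> Y!b" using ys(1) len by (simp add: sorted_nth_mono)
  have xsm: "\<And>a b. a \<le> b \<Longrightarrow> b < k \<Longrightarrow> X!a \<le> X!b" using xs len by (simp add: sorted_nth_mono)
  have lf: "\<And>j. j < k \<Longrightarrow> l j = (if p0 \<le> j \<and> j < q then Y!(Suc j) - Y!j else if j = q then r - Y!q else 0)"
    using Y' idx by (auto simp: l_def)
  have l0: "\<And>j. j < k \<Longrightarrow> 0 \<le> l j"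
  proof -
    fix j assume j: "j < k"
    show "0 \<le> l j" using lf[OF j] ysm[of j "Suc j"] ys idx j by auto
  qed
  have N1: "(\<Sum>j<k. l j) = r - Y!p0"
    by (rule tele[where a=p0 and b=q]) (use idx lf in auto)
  have R: "(\<Sum>j<k. (if Suc i \<le> j \<and> j \<le> q then l j else 0)) = r - Y!(Suc i)"
    by (rule tele[where a="Suc i" and b=q]) (use idx lf in auto)
  have Y'i: "Y'!i = Y!(Suc i)" using Y'[of i] idx by auto
  have Y'le: "\<And>j. Suc i \<le> j \<Longrightarrow> j \<le> q \<Longrightarrow> Y'!j \<le> r"
  proof -
    fix j assume "Suc i \<le> j" "j \<le> q"
    then show "Y'!j \<le> r" using Y'[of j] idx ysm[of "Suc j" q] ys by auto
  qed
  have Cal: "\<And>j. j < k \<Longrightarrow> C \<le> al + aw lam k j" unfolding C_def al_def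
    by (rule C_bound) (use lam idx in auto)
  have awal: "\<And>j. j < k \<Longrightarrow> aw lam k j \<le> al" unfolding al_def by (rule aw_le_alpha) (use lam in auto)
  have aw0: "\<And>j. 0 \<le> aw lam k j" using aw_nonneg lam by auto
  define h where "h j = aw lam k j * (\<bar>X'!j - Y'!j\<bar> - \<bar>X!j - Y!j\<bar>)" for j
  define h' where "h' j = al * l j - (if Suc i \<le> j \<and> j \<le> q then C * l j else 0)" for j
  have hle: "\<And>j. j < k \<Longrightarrow> j \<noteq> i \<Longrightarrow> j \<noteq> Suc i \<Longrightarrow> h j \<le> h' j"
  proof -
    fix j assume j: "j < k" "j \<noteq> i" "j \<noteq> Suc i"
    have xj: "X'!j = X!j" using xi(3) j by simp
    show "h j \<le> h' j"
    proof (cases "Suc i \<le> j \<and> j \<le> q")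
      case True
      have "X!(Suc i) \<le> X!j" using xsm[of "Suc i" j] True j by simp
      then have xr: "r \<le> X!j" using bnd lam d0 by (smt (verit) mult_nonneg_nonneg)
      have "Y'!j \<le> r" using Y'le True by simp
      moreover have "Y!j \<le> Y'!j" using l0[OF j(1)] by (simp add: l_def)
      ultimately have D: "\<bar>X'!j - Y'!j\<bar> - \<bar>X!j - Y!j\<bar> = - l j" using xr xj by (auto simp: l_def)
      have "(C - al - aw lam k j) * l j \<le> 0" using Cal[OF j(1)] l0[OF j(1)] by (simp add: mult_nonpos_nonneg)
      then show ?thesis unfolding h_def h'_def D using True by (simp add: algebra_simps)
    next
      case False
      have "\<bar>X'!j - Y'!j\<bar> - \<bar>X!j - Y!j\<bar> \<le> l j" using xj l0[OF j(1)] by (auto simp: l_def)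
      then have "h j \<le> aw lam k j * l j" unfolding h_def using aw0 mult_left_mono by blast
      also have "\<dots> \<le> al * l j" using mult_right_mono[OF awal[OF j(1)] l0[OF j(1)]] .
      moreover have "h' j = al * l j" unfolding h'_def using False by auto
      ultimately show ?thesis by simp
    qed
  qed
  define h'' where "h'' j = (if j = i then h i else if j = Suc i then h (Suc i) else h' j)" for j
  have "(\<Sum>j<k. h j) \<le> (\<Sum>j<k. h'' j)"
    by (rule sum_mono) (use hle in \<open>auto simp: h''_def\<close>)
  also have "(\<Sum>j<k. h'' j) = (\<Sum>j<k. h' j) + (h'' i - h' i) + (h'' (Suc i) - h' (Suc i))"
    by (rule sum_change2) (use idx in \<open>auto simp: h''_def\<close>)
  also have "(\<Sum>j<k. h' j) = al * (\<Sum>j<k. l j) - C * (\<Sum>j<k. (if Suc i \<le> j \<and> j \<le> q then l j else 0))"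
  proof -
    have "(\<Sum>j<k. h' j) = (\<Sum>j<k. al * l j) - (\<Sum>j<k. (if Suc i \<le> j \<and> j \<le> q then C * l j else 0))"
      unfolding h'_def by (rule sum_subtractf)
    also have "(\<Sum>j<k. al * l j) = al * (\<Sum>j<k. l j)" by (rule sum_distrib_left[symmetric])
    also have "(\<Sum>j<k. (if Suc i \<le> j \<and> j \<le> q then C * l j else 0)) = C * (\<Sum>j<k. (if Suc i \<le> j \<and> j \<le> q then l j else 0))"
      by (subst sum_distrib_left) (rule sum.cong, auto)
    finally show ?thesis .
  qed
  finally have Hs: "(\<Sum>j<k. h j) \<le> al * (r - Y!p0) - C * (r - Y!(Suc i)) + (h i - al * l i) + (h (Suc i) - (al * l (Suc i) - C * l (Suc i)))"
    unfolding N1 R h''_def h'_def using idx by simp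
  have Mt: "Mt lam k X' Y' = Mt lam k X Y + (\<Sum>j<k. h j)"
    by (simp add: Mt_def h_def sum_subtractf[symmetric] algebra_simps sum.distrib[symmetric])
  have Ps: "Psi lam k X' = Psi lam k X + (ww lam k i * X'!i - ww lam k i * X!i) + (ww lam k (Suc i) * X'!(Suc i) - ww lam k (Suc i) * X!(Suc i))"
    unfolding Psi_def by (rule sum_change2) (use idx xi in auto)
  have Ps2: "Psi lam k X' = Psi lam k X + ww lam k i * d - ww lam k (Suc i) * (lam * d)"
    using Ps xi by (simp add: algebra_simps)
  have Y'si: "Y'!(Suc i) \<le> r" using Y'le[of "Suc i"] idx by simp
  have Ysi: "Y!(Suc i) \<le> Y'!(Suc i)" using l0[of "Suc i"] idx by (simp add: l_def)
  have hsi: "h (Suc i) = - (aw lam k (Suc i) * (lam * d)) - aw lam k (Suc i) * l (Suc i)"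
  proof -
    have "r \<le> X'!(Suc i)" using xi bnd by simp
    moreover have "r \<le> X!(Suc i)" using bnd lam d0 by (smt (verit) mult_nonneg_nonneg)
    ultimately have E: "\<bar>X'!(Suc i) - Y'!(Suc i)\<bar> - \<bar>X!(Suc i) - Y!(Suc i)\<bar> = - (lam * d) - l (Suc i)"
      using Y'si Ysi xi by (auto simp: l_def)
    show ?thesis unfolding h_def E by (simp add: algebra_simps)
  qed
  define K where "K = 1 + lam - lam * aw lam k (Suc i) + ww lam k i - lam * ww lam k (Suc i)"
  have KL: "K \<le> aw lam k i" and KC: "K + aw lam k i \<le> C"
  proof -
    have e: "k - 1 - Suc i = k - 2 - i" by simp
    have s1: "0 \<le> lam * S lam (Suc i)" using S_nonneg lam by simp
    have s2: "0 \<le> S lam (k - 1 - i)" using S_nonneg lam by simp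
    have "K - aw lam k i = - 2 * (lam * S lam (Suc i)) - 2 * S lam (k - 1 - i)"
      unfolding K_def aw_def ww_def e by (simp add: algebra_simps)
    then show "K \<le> aw lam k i" using s1 s2 by linarith
    have "K + aw lam k i = 2 + 2 * S lam i - 2 * (lam * S lam (Suc i))"
      unfolding K_def aw_def ww_def e by (simp add: algebra_simps)
    then show "K + aw lam k i \<le> C" using s1 unfolding C_def by (simp add: algebra_simps)
  qed
  have hi: "K * d + h i \<le> al * l i + C * (r - Y!(Suc i))"
  proof -
    have "K*d + aw lam k i*(\<bar>X!i + d - Y!(Suc i)\<bar> - \<bar>X!i - Y!i\<bar>) \<le> al*(Y!(Suc i) - Y!i) + C*(r - Y!(Suc i))"
    proof (rule core_scalar)
      show "Y!i \<le> Y!(Suc i)" using ysm idx by simp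
      show "Y!(Suc i) < r" using ysm[of "Suc i" q] idx ys by simp
      show "0 \<le> C" unfolding C_def using S_nonneg lam by (simp add: add_nonneg_nonneg)
    qed (use d0 bnd KL KC aw0 awal idx in auto)
    then show ?thesis unfolding h_def l_def using xi Y'i by simp
  qed
  have Kd: "K * d = (1+lam)*d + ww lam k i * d - ww lam k (Suc i) * (lam * d) - aw lam k (Suc i) * (lam * d)"
    unfolding K_def by (simp add: algebra_simps)
  have last: "C * l (Suc i) - al * l (Suc i) - aw lam k (Suc i) * l (Suc i) \<le> 0"
  proof -
    have "(C - al - aw lam k (Suc i)) * l (Suc i) \<le> 0" using Cal[of "Suc i"] l0[of "Suc i"] idx
      by (simp add: mult_nonpos_nonneg)
    then show ?thesis by (simp add: algebra_simps)
  qed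
  have "(1+lam)*d + Phi lam k X' Y' = (1+lam)*d + Mt lam k X Y + (\<Sum>j<k. h j) + Psi lam k X + ww lam k i * d - ww lam k (Suc i) * (lam * d)"
    unfolding Phi_def Mt Ps2 by simp
  also have "\<dots> \<le> Phi lam k X Y + al * (r - Y!p0)"
    unfolding Phi_def using Hs hsi hi Kd last by linarith
  finally show ?thesis unfolding al_def .
qed



lemma dropWhile_less_ge:
  fixes xs :: "real list"
  shows "sorted xs \<Longrightarrow> x \<in> set (dropWhile (\<lambda>v. v < r) xs) \<Longrightarrow> r \<le> x"
proof (induction xs)
  case Nil then show ?case by simp
next
  case (Cons a xs)
  show ?case
  proof (cases "a < r")
    case True then show ?thesis using Cons by simp
  next
    case False
    then have "x \<in> set (a # xs)" using Cons.prems by simp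
    then have "a \<le> x" using Cons.prems(1) by auto
    then show ?thesis using False by simp
  qed
qed

lemma sort_char_left:
  fixes Y :: "real list"
  assumes ys: "sorted Y" "length Y = k" and p: "p0 < k" "Y!p0 < r"
  obtains q where "p0 \<le> q" "q < k" "Y!q < r" "\<And>j. q < j \<Longrightarrow> j < k \<Longrightarrow> r \<le> Y!j"
    "\<And>j. j < k \<Longrightarrow> sort (Y[p0:=r])!j = (if j < p0 then Y!j else if j < q then Y!(Suc j) else if j = q then r else Y!j)"
proof -
  define T where "T = drop (Suc p0) Y"
  define mid where "mid = takeWhile (\<lambda>v. v < r) T"
  define rest where "rest = dropWhile (\<lambda>v. v < r) T"
  define q where "q = p0 + length mid"
  define Z where "Z = take p0 Y @ mid @ r # rest"
  have Tmr: "T = mid @ rest" unfolding mid_def rest_def by simp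
  have lT: "length T = k - Suc p0" using ys by (simp add: T_def)
  have Tn: "\<And>m. m < length T \<Longrightarrow> T!m = Y!(Suc p0 + m)" unfolding T_def using ys p by simp
  have Ysplit: "Y = take p0 Y @ Y!p0 # T" unfolding T_def using p ys by (simp add: id_take_nth_drop)
  have sT: "sorted T" using ys(1) unfolding T_def by (simp add: sorted_wrt_drop)
  have smid: "sorted mid" and srest: "sorted rest" and midrest: "\<forall>a\<in>set mid. \<forall>b\<in>set rest. a \<le> b"
    using sT unfolding Tmr by (auto simp: sorted_append)
  have midlt: "\<forall>a\<in>set mid. a < r" unfolding mid_def by (auto dest: set_takeWhileD)
  have restge: "\<forall>b\<in>set rest. r \<le> b" unfolding rest_def using dropWhile_less_ge[OF sT] by blast
  have stake: "sorted (take p0 Y)" using ys(1) by (simp add: sorted_wrt_take)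
  have tle: "\<forall>a\<in>set (take p0 Y). a \<le> Y!p0 \<and> (\<forall>b\<in>set T. a \<le> b)"
  proof -
    have "sorted (take p0 Y @ Y!p0 # T)" using ys(1) Ysplit by metis
    then show ?thesis by (auto simp: sorted_append)
  qed
  have sZ: "sorted Z"
    unfolding Z_def sorted_append using stake smid srest midrest midlt restge tle p Tmr
    by (auto simp: sorted_append intro: order_trans less_imp_le)
  have mZ: "mset Z = mset (Y[p0 := r])"
  proof -
    have "Y[p0 := r] = take p0 Y @ r # T" unfolding T_def using p ys by (simp add: upd_conv_take_nth_drop)
    then show ?thesis unfolding Z_def Tmr by simp
  qed
  have sortZ: "sort (Y[p0 := r]) = Z" by (rule properties_for_sort[OF mZ sZ])
  have lmid: "length mid \<le> length T" unfolding Tmr by simp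
  have q1: "p0 \<le> q" "q < k" using lmid lT p unfolding q_def by auto
  have midn: "\<And>m. m < length mid \<Longrightarrow> mid!m = T!m" unfolding Tmr by (simp add: nth_append)
  have restn: "\<And>m. m < length rest \<Longrightarrow> rest!m = T!(length mid + m)" unfolding Tmr by (simp add: nth_append)
  have lrest: "length rest = k - Suc p0 - length mid" using lT unfolding Tmr by simp
  have q2: "Y!q < r"
  proof (cases "mid = []")
    case True then show ?thesis using p unfolding q_def by simp
  next
    case False
    then have m0: "length mid - 1 < length mid" by simp
    have "mid!(length mid - 1) \<in> set mid" using m0 by (rule nth_mem)
    then have lt: "mid!(length mid - 1) < r" using midlt by blast
    have m1: "length mid - 1 < length T" using m0 lmid by simp
    have e: "Suc (p0 + (length mid - 1)) = q" using False unfolding q_def by (cases mid) auto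
    have "mid!(length mid - 1) = Y!q" using midn[OF m0] Tn[OF m1] e by simp
    then show ?thesis using lt by simp
  qed
  have q3: "\<And>j. q < j \<Longrightarrow> j < k \<Longrightarrow> r \<le> Y!j"
  proof -
    fix j assume j: "q < j" "j < k"
    define t where "t = j - Suc q"
    have t: "t < length rest" using j lrest unfolding t_def q_def by simp
    have "rest!t \<in> set rest" using t by (rule nth_mem)
    then have "r \<le> rest!t" using restge by blast
    moreover have "rest!t = Y!j" using restn[OF t] Tn[of "length mid + t"] t lrest lT j
      unfolding t_def q_def by simp
    ultimately show "r \<le> Y!j" by simp
  qed
  have q4: "\<And>j. j < k \<Longrightarrow> sort (Y[p0:=r])!j = (if j < p0 then Y!j else if j < q then Y!(Suc j) else if j = q then r else Y!j)"
  proof -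
    fix j assume j: "j < k"
    have lt: "length (take p0 Y) = p0" using p ys by simp
    show "sort (Y[p0:=r])!j = (if j < p0 then Y!j else if j < q then Y!(Suc j) else if j = q then r else Y!j)"
    proof (cases "j < p0")
      case True then show ?thesis unfolding sortZ Z_def using lt by (simp add: nth_append)
    next
      case F1: False
      show ?thesis
      proof (cases "j < q")
        case True
        have m: "j - p0 < length mid" using True F1 unfolding q_def by simp
        have "Z!j = mid!(j - p0)" unfolding Z_def using lt F1 m by (simp add: nth_append)
        also have "\<dots> = Y!(Suc j)" using midn[OF m] Tn[of "j - p0"] m lmid F1 by simp
        finally show ?thesis unfolding sortZ using F1 True by simp
      next
        case F2: False
        show ?thesis
        proof (cases "j = q")
          case True
          have "Z!j = r" unfolding Z_def using lt True unfolding q_def by (simp add: nth_append)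
          then show ?thesis unfolding sortZ using F1 True by simp
        next
          case F3: False
          define t where "t = j - Suc q"
          have t: "t < length rest" using j lrest F2 F3 unfolding t_def q_def by simp
          have "Z!j = (mid @ r # rest)!(j - p0)" unfolding Z_def using lt F1 by (simp add: nth_append)
          also have "\<dots> = (r # rest)!(j - p0 - length mid)"
          proof -
            have nl: "\<not> (j - p0 < length mid)" using F1 F2 unfolding q_def by simp
            show ?thesis by (subst nth_append) (use nl in simp)
          qed
          also have "j - p0 - length mid = Suc t" using F2 F3 unfolding t_def q_def by simp
          finally have "Z!j = rest!t" by simp
          also have "\<dots> = Y!j" using restn[OF t] Tn[of "length mid + t"] t lrest lT j F2 F3
            unfolding t_def q_def by simp
          finally show ?thesis unfolding sortZ using F1 F2 F3 by simp
        qed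
      qed
    qed
  qed
  show ?thesis using that[OF q1 q2 q3 q4] .
qed



definition rf :: "real list \<Rightarrow> real list" where
  "rf X = rev (map uminus X)"

lemma rf_len[simp]: "length (rf X) = length X" by (simp add: rf_def)

lemma rf_nth: "j < length X \<Longrightarrow> rf X ! j = - X!(length X - Suc j)"
  by (simp add: rf_def rev_nth)

lemma rf_rf[simp]: "rf (rf X) = X" by (simp add: rf_def rev_map)

lemma rf_sorted: "sorted X \<Longrightarrow> sorted (rf X)"
  unfolding sorted_iff_nth_mono
proof (intro allI impI)
  fix i j assume s: "\<forall>i j. i \<le> j \<longrightarrow> j < length X \<longrightarrow> X ! i \<le> X ! j" and ij: "i \<le> j" "j < length (rf X)"
  have "X!(length X - Suc j) \<le> X!(length X - Suc i)" using s ij by auto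
  then show "rf X ! i \<le> rf X ! j" using ij by (simp add: rf_nth)
qed

lemma mset_rf: "mset (rf X) = image_mset uminus (mset X)" by (simp add: rf_def)

lemma sort_rf: "sort (rf Z) = rf (sort Z)"
proof (rule properties_for_sort)
  show "mset (rf (sort Z)) = mset (rf Z)" by (simp add: mset_rf)
  show "sorted (rf (sort Z))" by (rule rf_sorted) simp
qed

lemma upd_rf: "p0 < length Y \<Longrightarrow> rf (Y[p0 := r]) = (rf Y)[length Y - Suc p0 := -r]"
  by (simp add: rf_def map_update rev_update)

lemma set_rf: "x \<in> set (rf X) \<longleftrightarrow> -x \<in> set X"
  by (auto simp: rf_def image_iff) (metis minus_minus)

lemma sum_rf: "(\<Sum>j<k. f (k - Suc j)) = (\<Sum>j<k. (f j :: real))"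
  by (rule sum.nat_diff_reindex)

lemma aw_sym: "j < k \<Longrightarrow> aw mu k (k - Suc j) = aw mu k j"
  by (simp add: aw_def Suc_diff_Suc)

lemma ww_asym: "j < k \<Longrightarrow> ww mu k (k - Suc j) = - ww mu k j"
  by (simp add: ww_def Suc_diff_Suc)

lemma Phi_rf:
  assumes "length X = k" "length Y = k"
  shows "Phi mu k (rf X) (rf Y) = Phi mu k X Y"
proof -
  have "Mt mu k (rf X) (rf Y) = (\<Sum>j<k. aw mu k (k - Suc (k - Suc j)) * \<bar>X!(k - Suc j) - Y!(k - Suc j)\<bar>)"
    unfolding Mt_def by (rule sum.cong) (use assms in \<open>auto simp: rf_nth aw_sym abs_minus_commute\<close>)
  also have "\<dots> = (\<Sum>j<k. aw mu k (k - Suc j) * \<bar>X!j - Y!j\<bar>)"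
    by (rule sum_rf[where f="\<lambda>j. aw mu k (k - Suc j) * \<bar>X!j - Y!j\<bar>"])
  also have "\<dots> = Mt mu k X Y" unfolding Mt_def by (rule sum.cong) (auto simp: aw_sym)
  finally have M: "Mt mu k (rf X) (rf Y) = Mt mu k X Y" .
  have "Psi mu k (rf X) = (\<Sum>j<k. (\<lambda>j. ww mu k (k - Suc j) * (- X!j)) (k - Suc j))"
    unfolding Psi_def by (rule sum.cong) (use assms in \<open>auto simp: rf_nth Suc_diff_Suc\<close>)
  also have "\<dots> = (\<Sum>j<k. ww mu k (k - Suc j) * (- X!j))" by (rule sum_rf)
  also have "\<dots> = Psi mu k X" unfolding Psi_def by (rule sum.cong) (auto simp: ww_asym)
  finally show ?thesis using M by (simp add: Phi_def)
qed

lemma mc_rf: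
  assumes "length A = k" "length B = k"
  shows "move_cost (rf A) (rf B) = move_cost A B"
proof -
  have "move_cost (rf A) (rf B) = (\<Sum>j<k. (\<lambda>j. \<bar>A!j - B!j\<bar>) (k - Suc j))"
    unfolding move_cost_def using assms by (intro sum.cong) (auto simp: rf_nth abs_minus_commute)
  also have "\<dots> = (\<Sum>j<k. \<bar>A!j - B!j\<bar>)" by (rule sum_rf[where f="\<lambda>j. \<bar>A!j - B!j\<bar>"])
  also have "\<dots> = move_cost A B" using assms by (simp add: move_cost_def)
  finally show ?thesis .
qed

lemma sort_rf_upd:
  assumes "p0 < length Y"
  shows "sort (Y[p0 := r]) = rf (sort ((rf Y)[length Y - Suc p0 := - r]))"
  using assms by (simp add: upd_rf[symmetric] sort_rf)

lemma chain_facts: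
  fixes Y Y' :: "real list"
  assumes ys: "sorted Y" "length Y = k" and q: "p0 \<le> q" "q < k" "Y!q < r"
    and Y': "\<And>j. j<k \<Longrightarrow> Y'!j = (if j < p0 then Y!j else if j < q then Y!(Suc j) else if j = q then r else Y!j)"
  shows "\<And>j. j < k \<Longrightarrow> 0 \<le> Y'!j - Y!j" and "(\<Sum>j<k. Y'!j - Y!j) = r - Y!p0"
proof -
  have ysm: "\<And>a b. a \<le> b \<Longrightarrow> b < k \<Longrightarrow> Y!a \<le> Y!b" using ys by (simp add: sorted_nth_mono)
  have lf: "\<And>j. j < k \<Longrightarrow> Y'!j - Y!j = (if p0 \<le> j \<and> j < q then Y!(Suc j) - Y!j else if j = q then r - Y!q else 0)"
    using Y' q by auto
  show "\<And>j. j < k \<Longrightarrow> 0 \<le> Y'!j - Y!j"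
  proof -
    fix j assume j: "j < k"
    show "0 \<le> Y'!j - Y!j" using lf[OF j] ysm[of j "Suc j"] q j by auto
  qed
  show "(\<Sum>j<k. Y'!j - Y!j) = r - Y!p0"
    by (rule tele[where a=p0 and b=q]) (use q lf in auto)
qed

lemma N1:
  fixes Y :: "real list"
  assumes "sorted Y" "length Y = k" "p0 < k"
  shows "move_cost Y (sort (Y[p0 := r])) = \<bar>r - Y!p0\<bar>"
proof -
  consider (lt) "Y!p0 < r" | (eq) "Y!p0 = r" | (gt) "r < Y!p0" by linarith
  then show ?thesis
  proof cases
    case lt
    obtain q where q: "p0 \<le> q" "q < k" "Y!q < r" "\<And>j. q < j \<Longrightarrow> j < k \<Longrightarrow> r \<le> Y!j"
      "\<And>j. j < k \<Longrightarrow> sort (Y[p0:=r])!j = (if j < p0 then Y!j else if j < q then Y!(Suc j) else if j = q then r else Y!j)"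
      using sort_char_left[OF assms lt] by blast
    note cf = chain_facts[OF assms(1,2) q(1,2,3) q(5)]
    have "move_cost Y (sort (Y[p0 := r])) = (\<Sum>j<k. sort (Y[p0:=r])!j - Y!j)"
      unfolding move_cost_def using assms cf(1) by (intro sum.cong) auto
    then show ?thesis using cf(2) lt by simp
  next
    case eq
    then have "Y[p0 := r] = Y" by auto
    then show ?thesis using assms eq by (simp add: move_cost_def sorted_sort_id)
  next
    case gt
    define W where "W = rf Y"
    have sW: "sorted W" "length W = k" using assms by (auto simp: W_def rf_sorted)
    have p': "k - Suc p0 < k" using assms by simp
    have wl: "W!(k - Suc p0) < -r" using gt assms by (simp add: W_def rf_nth Suc_diff_Suc)
    have e: "sort (Y[p0 := r]) = rf (sort (W[k - Suc p0 := -r]))"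
      using sort_rf_upd[of p0 Y r] assms by (simp add: W_def)
    have "move_cost Y (sort (Y[p0 := r])) = move_cost (rf W) (rf (sort (W[k - Suc p0 := -r])))"
      using e by (simp add: W_def)
    also have "\<dots> = move_cost W (sort (W[k - Suc p0 := -r]))" by (rule mc_rf) (use sW in auto)
    also have "\<dots> = \<bar>-r - W!(k - Suc p0)\<bar>"
    proof -
      obtain q where q: "k - Suc p0 \<le> q" "q < k" "W!q < -r" "\<And>j. q < j \<Longrightarrow> j < k \<Longrightarrow> -r \<le> W!j"
        "\<And>j. j < k \<Longrightarrow> sort (W[k - Suc p0:=-r])!j = (if j < k - Suc p0 then W!j else if j < q then W!(Suc j) else if j = q then -r else W!j)"
        using sort_char_left[OF sW p' wl] by blast
      note cf = chain_facts[OF sW q(1,2,3) q(5)]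
      have "move_cost W (sort (W[k - Suc p0 := -r])) = (\<Sum>j<k. sort (W[k - Suc p0:=-r])!j - W!j)"
        unfolding move_cost_def using sW cf(1) by (intro sum.cong) auto
      then show ?thesis using cf(2) wl by simp
    qed
    also have "\<dots> = \<bar>r - Y!p0\<bar>" using assms by (simp add: W_def rf_nth Suc_diff_Suc abs_minus_commute)
    finally show ?thesis .
  qed
qed



lemma char_props:
  fixes Y Y' :: "real list"
  assumes ys: "sorted Y" "length Y = k" and q: "p0 \<le> q" "q < k" "Y!q < r" "\<And>j. q < j \<Longrightarrow> j < k \<Longrightarrow> r \<le> Y!j"
    and Y': "\<And>j. j<k \<Longrightarrow> Y'!j = (if j < p0 then Y!j else if j < q then Y!(Suc j) else if j = q then r else Y!j)"
  shows "\<And>j. j < k \<Longrightarrow> j \<le> q \<Longrightarrow> Y'!j \<le> r" and "\<And>j. j < k \<Longrightarrow> q \<le> j \<Longrightarrow> r \<le> Y'!j"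
proof -
  have ysm: "\<And>a b. a \<le> b \<Longrightarrow> b < k \<Longrightarrow> Y!a \<le> Y!b" using ys by (simp add: sorted_nth_mono)
  show "\<And>j. j < k \<Longrightarrow> j \<le> q \<Longrightarrow> Y'!j \<le> r"
  proof -
    fix j assume j: "j < k" "j \<le> q"
    show "Y'!j \<le> r" using Y'[OF j(1)] ysm[of j q] ysm[of "Suc j" q] j q by auto
  qed
  show "\<And>j. j < k \<Longrightarrow> q \<le> j \<Longrightarrow> r \<le> Y'!j"
  proof -
    fix j assume j: "j < k" "q \<le> j"
    show "r \<le> Y'!j" using Y'[OF j(1)] q(4)[of j] j q by auto
  qed
qed

lemma cons_step:
  assumes lam: "0 \<le> lam" "lam \<le> 1" and X: "valid k X" and Y: "valid k Y" and p: "1 \<le> p" "p \<le> k" and k: "1 \<le> k"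
  shows "move_cost X (ldc lam X r p) + Phi lam k (ldc lam X r p) (sort (Y[p-1 := r]))
           \<le> Phi lam k X Y + alpha lam k * \<bar>Y!(p-1) - r\<bar>"
proof -
  define p0 where "p0 = p - 1"
  define Y' where "Y' = sort (Y[p0 := r])"
  define X' where "X' = ldc lam X r p"
  have p0: "p0 < k" using p unfolding p0_def by simp
  have sx: "sorted X" "length X = k" using X by (auto simp: valid_def)
  have sy: "sorted Y" "length Y = k" using Y by (auto simp: valid_def)
  have sY': "sorted Y'" "length Y' = k" using sy unfolding Y'_def by auto
  have rY': "r \<in> set Y'" using sy p0 unfolding Y'_def by (simp add: set_update_memI)
  have ysm: "\<And>a b. a \<le> b \<Longrightarrow> b < k \<Longrightarrow> Y!a \<le> Y!b" using sy by (simp add: sorted_nth_mono)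
  have adv: "Phi lam k X Y' \<le> Phi lam k X Y + alpha lam k * \<bar>Y!p0 - r\<bar>"
  proof -
    have "Phi lam k X Y' \<le> Phi lam k X Y + alpha lam k * move_cost Y Y'"
      by (rule adv_step) (use sy aw_le_alpha aw_nonneg lam in auto)
    moreover have "move_cost Y Y' = \<bar>Y!p0 - r\<bar>" unfolding Y'_def using N1[OF sy p0] by (simp add: abs_minus_commute)
    ultimately show ?thesis by simp
  qed
  have goal_from_good: "move_cost X X' + Phi lam k X' Y' \<le> Phi lam k X Y'
     \<Longrightarrow> move_cost X X' + Phi lam k X' Y' \<le> Phi lam k X Y + alpha lam k * \<bar>Y!p0 - r\<bar>"
    using adv by linarith
  have S0: "\<And>n. 0 \<le> 1 + S lam n" using S_nonneg[OF lam(1)] by (simp add: add_nonneg_nonneg)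
  have refl_facts: "Y!p0 > r \<Longrightarrow> (\<exists>W W' q. W = rf Y \<and> Y' = rf W' \<and> sorted W \<and> length W = k \<and> length W' = k \<and>
      k - Suc p0 \<le> q \<and> q < k \<and> W!q < -r \<and> (\<forall>j. q < j \<longrightarrow> j < k \<longrightarrow> -r \<le> W!j) \<and>
      (\<forall>j<k. W'!j = (if j < k - Suc p0 then W!j else if j < q then W!(Suc j) else if j = q then -r else W!j)) \<and>
      W!(k - Suc p0) = - Y!p0)"
  proof -
    assume gt: "Y!p0 > r"
    define W where "W = rf Y"
    define W' where "W' = sort (W[k - Suc p0 := -r])"
    have sW: "sorted W" "length W = k" using sy by (auto simp: W_def rf_sorted)
    have p': "k - Suc p0 < k" using p0 by simp
    have wv: "W!(k - Suc p0) = - Y!p0" using p0 sy by (simp add: W_def rf_nth Suc_diff_Suc)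
    then have wl: "W!(k - Suc p0) < -r" using gt by simp
    have e: "Y' = rf W'" unfolding Y'_def W'_def W_def using sort_rf_upd[of p0 Y r] sy p0 by simp
    obtain q where q: "k - Suc p0 \<le> q" "q < k" "W!q < -r" "\<And>j. q < j \<Longrightarrow> j < k \<Longrightarrow> -r \<le> W!j"
        "\<And>j. j < k \<Longrightarrow> W'!j = (if j < k - Suc p0 then W!j else if j < q then W!(Suc j) else if j = q then -r else W!j)"
      using sort_char_left[OF sW p' wl] unfolding W'_def by blast
    show ?thesis using sW e q wv sY' by (intro exI[of _ W] exI[of _ W'] exI[of _ q]) (auto simp: W_def W'_def)
  qed
  show ?thesis
  proof (rule ldc_cases[OF lam(1) sx(1) sx(2) k, of r p], goal_cases)
    case 1 then show ?case using adv by (simp add: move_cost_def p0_def Y'_def)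
  next
    case 2
    have "move_cost X X' + Phi lam k X' Y' \<le> Phi lam k X Y'"
      unfolding X'_def 2(3) by (rule bound_left[OF sx(2) k 2(2)]) (use r_bounds[OF sY' rY'] in simp)
    then show ?case using goal_from_good unfolding X'_def p0_def Y'_def by simp
  next
    case 3
    have "move_cost X X' + Phi lam k X' Y' \<le> Phi lam k X Y'"
      unfolding X'_def 3(3) by (rule bound_right[OF sx(2) k 3(2)]) (use r_bounds[OF sY' rY'] in simp)
    then show ?case using goal_from_good unfolding X'_def p0_def Y'_def by simp
  next
    case (4 i d)
    have d: "0 \<le> d" "0 \<le> lam * d" using 4 lam by auto
    have ip: "p0 \<le> i" using 4(4) unfolding p0_def by simp
    have X'e: "X' = X[i := X!i + d, Suc i := X!(Suc i) - lam*d]" unfolding X'_def using 4(9) .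
    show ?case
    proof (cases "r \<le> Y'!i")
      case True
      have "move_cost X X' + Phi lam k X' Y' \<le> Phi lam k X Y' + 2*(1 + S lam (k-2-i))*(lam*d - lam*d)"
        unfolding X'e by (rule mlb1[OF sx(2) 4(1) lam(1) d 4(6) 4(7) True])
      then have "move_cost X X' + Phi lam k X' Y' \<le> Phi lam k X Y'" by simp
      then show ?thesis using goal_from_good unfolding X'_def p0_def Y'_def by simp
    next
      case False
      then have bad: "Y'!i < r" by simp
      have ylt: "Y!p0 < r"
      proof (rule ccontr)
        assume "\<not> Y!p0 < r"
        then consider "Y!p0 = r" | "Y!p0 > r" by linarith
        then show False
        proof cases
          case 1
          then have "Y' = Y" unfolding Y'_def using sy by (auto simp: sorted_sort_id)
          then show False using bad ysm[of p0 i] ip 4(1) 1 by simp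
        next
          case 2
          then obtain W W' q where R: "W = rf Y" "Y' = rf W'" "sorted W" "length W = k" "length W' = k"
            "k - Suc p0 \<le> q" "q < k" "W!q < -r" "\<forall>j. q < j \<longrightarrow> j < k \<longrightarrow> -r \<le> W!j"
            "\<forall>j<k. W'!j = (if j < k - Suc p0 then W!j else if j < q then W!(Suc j) else if j = q then -r else W!j)"
            using refl_facts by blast
          have cp: "\<And>j. j < k \<Longrightarrow> j \<le> q \<Longrightarrow> W'!j \<le> -r"
            using char_props(1)[OF R(3,4,6,7,8)] R(9,10) by blast
          have "W'!(k - Suc i) \<le> -r" using cp[of "k - Suc i"] ip R(6) 4(1) by simp
          moreover have "Y'!i = - W'!(k - Suc i)" using R(2,5) 4(1) by (simp add: rf_nth)
          ultimately show False using bad by simp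
        qed
      qed
      obtain q where q: "p0 \<le> q" "q < k" "Y!q < r" "\<And>j. q < j \<Longrightarrow> j < k \<Longrightarrow> r \<le> Y!j"
        "\<And>j. j < k \<Longrightarrow> Y'!j = (if j < p0 then Y!j else if j < q then Y!(Suc j) else if j = q then r else Y!j)"
        using sort_char_left[OF sy p0 ylt] unfolding Y'_def by blast
      have iq: "i < q"
      proof (rule ccontr)
        assume "\<not> i < q"
        then have "r \<le> Y'!i" using char_props(2)[OF sy q(1,2,3,4) q(5)] 4(1) by simp
        then show False using bad by simp
      qed
      have mc: "move_cost X X' = (1 + lam) * d" unfolding X'e using mc_upd2[OF sx(2) 4(1)] d by (simp add: algebra_simps)
      have "(1+lam)*d + Phi lam k X' Y' \<le> Phi lam k X Y + alpha lam k * (r - Y!p0)"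
      proof (rule bad_left[OF sx(2) sy(2) 4(1) ip iq q(2) lam d(1) sx(1) _ _ _ 4(6) 4(7) sy(1) q(3) q(5)])
        show "X'!i = X!i + d" unfolding X'e using 4(1) sx by simp
        show "X'!(Suc i) = X!(Suc i) - lam*d" unfolding X'e using 4(1) sx by simp
        show "\<And>j. j < k \<Longrightarrow> j \<noteq> i \<Longrightarrow> j \<noteq> Suc i \<Longrightarrow> X'!j = X!j" unfolding X'e by simp
      qed
      then show ?thesis using mc ylt unfolding X'_def p0_def Y'_def by simp
    qed
  next
    case (5 i d)
    have d: "0 \<le> lam * d" "0 \<le> d" using 5 lam by auto
    have ip: "Suc i \<le> p0" using 5(4) unfolding p0_def by simp
    have X'e: "X' = X[i := X!i + lam*d, Suc i := X!(Suc i) - d]" unfolding X'_def using 5(9) .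
    show ?case
    proof (cases "Y'!(Suc i) \<le> r")
      case True
      have "move_cost X X' + Phi lam k X' Y' \<le> Phi lam k X Y' + 2*(1 + S lam i)*(lam*d - lam*d)"
        unfolding X'e by (rule mlb2[OF sx(2) 5(1) lam(1) d 5(6) 5(7) True])
      then have "move_cost X X' + Phi lam k X' Y' \<le> Phi lam k X Y'" by simp
      then show ?thesis using goal_from_good unfolding X'_def p0_def Y'_def by simp
    next
      case False
      then have bad: "r < Y'!(Suc i)" by simp
      have ygt: "Y!p0 > r"
      proof (rule ccontr)
        assume "\<not> Y!p0 > r"
        then consider "Y!p0 = r" | "Y!p0 < r" by linarith
        then show False
        proof cases
          case 1
          then have "Y' = Y" unfolding Y'_def using sy by (auto simp: sorted_sort_id)
          then show False using bad ysm[of "Suc i" p0] ip p0 1 by simp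
        next
          case 2
          obtain q where q: "p0 \<le> q" "q < k" "Y!q < r" "\<And>j. q < j \<Longrightarrow> j < k \<Longrightarrow> r \<le> Y!j"
            "\<And>j. j < k \<Longrightarrow> Y'!j = (if j < p0 then Y!j else if j < q then Y!(Suc j) else if j = q then r else Y!j)"
            using sort_char_left[OF sy p0 2] unfolding Y'_def by blast
          have "Y'!(Suc i) \<le> r" using char_props(1)[OF sy q(1,2,3,4) q(5)] ip q(1) 5(1) by simp
          then show False using bad by simp
        qed
      qed
      obtain W W' q where R: "W = rf Y" "Y' = rf W'" "sorted W" "length W = k" "length W' = k"
        "k - Suc p0 \<le> q" "q < k" "W!q < -r" "\<forall>j. q < j \<longrightarrow> j < k \<longrightarrow> -r \<le> W!j"
        "\<forall>j<k. W'!j = (if j < k - Suc p0 then W!j else if j < q then W!(Suc j) else if j = q then -r else W!j)"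
        "W!(k - Suc p0) = - Y!p0"
        using refl_facts[OF ygt] by blast
      define ii where "ii = k - Suc (Suc i)"
      have ii: "Suc ii < k" "k - Suc p0 \<le> ii" "Suc ii = k - Suc i" "k - Suc ii = Suc i" "k - Suc (Suc ii) = i" "k - Suc ii < k"
        using 5(1) ip p0 unfolding ii_def by auto
      have iiq: "ii < q"
      proof (rule ccontr)
        assume "\<not> ii < q"
        then have "-r \<le> W'!ii" using char_props(2)[OF R(3,4,6,7,8)] R(9,10) ii by auto
        moreover have "Y'!(Suc i) = - W'!ii" using R(2,5) ii 5(1) by (simp add: rf_nth ii_def)
        ultimately show False using bad by simp
      qed
      let ?A = "rf X" and ?A' = "rf X'"
      have sA: "sorted ?A" "length ?A = k" using sx by (auto simp: rf_sorted)
      have lX': "length X' = k" unfolding X'e using sx by simp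
      have mc: "move_cost X X' = (1 + lam) * d" unfolding X'e using mc_upd2[OF sx(2) 5(1)] d by (simp add: algebra_simps)
      have "(1+lam)*d + Phi lam k ?A' W' \<le> Phi lam k ?A W + alpha lam k * (-r - W!(k - Suc p0))"
      proof (rule bad_left[OF sA(2) R(4) ii(1) ii(2) iiq R(7) lam d(2) sA(1)])
        show "?A'!ii = ?A!ii + d" using sx lX' ii 5(1) unfolding X'e by (simp add: rf_nth)
        show "?A'!(Suc ii) = ?A!(Suc ii) - lam*d" using sx lX' ii 5(1) unfolding X'e by (simp add: rf_nth)
        show "\<And>j. j < k \<Longrightarrow> j \<noteq> ii \<Longrightarrow> j \<noteq> Suc ii \<Longrightarrow> ?A'!j = ?A!j"
        proof -
          fix j assume j: "j < k" "j \<noteq> ii" "j \<noteq> Suc ii"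
          have "k - Suc j \<noteq> i" "k - Suc j \<noteq> Suc i" using j ii by auto
          then show "?A'!j = ?A!j" using sx lX' j unfolding X'e by (simp add: rf_nth)
        qed
        show "?A!ii + d \<le> -r" using sx ii 5(7) by (simp add: rf_nth)
        show "-r \<le> ?A!(Suc ii) - lam*d" using sx ii 5(6) by (simp add: rf_nth)
        show "W!q < -r" by (rule R(8))
        show "\<And>j. j < k \<Longrightarrow> W'!j = (if j < k - Suc p0 then W!j else if j < q then W!(Suc j) else if j = q then -r else W!j)"
          using R(10) by blast
      qed (use R(3) in auto)
      moreover have "Phi lam k ?A' W' = Phi lam k X' Y'" using Phi_rf[OF lX' sY'(2), of lam] R(2) by simp
      moreover have "Phi lam k ?A W = Phi lam k X Y" using Phi_rf[OF sx(2) sy(2), of lam] R(1) by simp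
      ultimately show ?thesis using mc ygt R(11) unfolding X'_def p0_def Y'_def by simp
    qed
  qed
qed



lemma cons_run:
  assumes lam: "0 \<le> lam" "lam \<le> 1" and k: "1 \<le> k"
  shows "valid k X \<Longrightarrow> valid k Y \<Longrightarrow> valid_prediction k rs ps \<Longrightarrow>
    alg_cost (ldc lam) X rs ps \<le> alpha lam k * ftp_cost Y rs ps + Phi lam k X Y"
proof (induction rs arbitrary: X Y ps)
  case Nil
  then show ?case using Phi_nonneg[of lam X k Y] lam by (simp add: valid_def)
next
  case (Cons r rs)
  obtain p ps' where ps: "ps = p # ps'" using Cons.prems(3) by (cases ps) (auto simp: valid_prediction_def)
  have p: "1 \<le> p" "p \<le> k" using Cons.prems(3) ps by (auto simp: valid_prediction_def)
  have vp: "valid_prediction k rs ps'" using Cons.prems(3) ps by (auto simp: valid_prediction_def)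
  let ?X' = "ldc lam X r p" and ?Y' = "sort (Y[p-1 := r])"
  have vX': "valid k ?X'" using ldc_valid[OF lam(1) Cons.prems(1) k] by simp
  have vY': "valid k ?Y'" using Cons.prems(2) by (simp add: valid_def)
  have IH: "alg_cost (ldc lam) ?X' rs ps' \<le> alpha lam k * ftp_cost ?Y' rs ps' + Phi lam k ?X' ?Y'"
    by (rule Cons.IH[OF vX' vY' vp])
  have st: "move_cost X ?X' + Phi lam k ?X' ?Y' \<le> Phi lam k X Y + alpha lam k * \<bar>Y!(p-1) - r\<bar>"
    by (rule cons_step[OF lam Cons.prems(1,2) p k])
  show ?case using IH st ps by (simp add: algebra_simps)
qed

lemma OPT_bound:
  assumes lam: "0 < lam" "lam \<le> 1" and k: "1 \<le> k" and X: "valid k X"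
  shows "alg_cost (ldc lam) X rs ps \<le> beta lam k * OPT k X rs + Psi (1/lam) k X"
proof -
  let ?P = "{path_cost X Ds | Ds. length Ds = length rs \<and>
      (\<forall>t<length rs. valid_config k (Ds ! t) \<and> rs ! t \<in> set (Ds ! t))}"
  have b: "0 < beta lam k"
  proof -
    have "beta lam k = (\<Sum>i<k. (1 / lam) ^ i)" by (simp add: beta_def)
    also have "\<dots> \<ge> (\<Sum>i<1. (1 / lam) ^ i)"
      by (rule sum_mono2) (use k lam in auto)
    finally show ?thesis by simp
  qed
  have ne: "?P \<noteq> {}"
  proof -
    let ?Ds = "map (\<lambda>r. replicate k r) rs"
    have "\<forall>t<length rs. valid_config k (?Ds ! t) \<and> rs ! t \<in> set (?Ds ! t)"
      using k by (auto simp: valid_config_def)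
    then have "path_cost X ?Ds \<in> ?P" by auto
    then show ?thesis by blast
  qed
  have "(alg_cost (ldc lam) X rs ps - Psi (1/lam) k X) / beta lam k \<le> Inf ?P"
  proof (rule cInf_greatest[OF ne])
    fix x assume "x \<in> ?P"
    then obtain Ds where Ds: "x = path_cost X Ds" "length Ds = length rs"
      "\<forall>t<length rs. valid_config k (Ds ! t) \<and> rs ! t \<in> set (Ds ! t)" by blast
    have "alg_cost (ldc lam) X rs ps \<le> beta lam k * path_cost X Ds + Phi (1/lam) k X X"
      by (rule robust_run[OF lam k X X Ds(2) Ds(3)])
    then have "alg_cost (ldc lam) X rs ps - Psi (1/lam) k X \<le> beta lam k * x" using Ds(1) by (simp add: Phi_self)
    then show "(alg_cost (ldc lam) X rs ps - Psi (1/lam) k X) / beta lam k \<le> x"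
      using b by (simp add: divide_le_eq mult.commute)
  qed
  then have "alg_cost (ldc lam) X rs ps - Psi (1/lam) k X \<le> beta lam k * Inf ?P"
    using b by (simp add: divide_le_eq mult.commute)
  then show ?thesis by (simp add: OPT_def)
qed



lemma alg_final_Cons: "alg_final A X (r # rs) (p # ps) = alg_final A (A X r p) rs ps" by simp

lemma descent:
  fixes A :: mc_alg and M :: "real list \<Rightarrow> real" and mu :: "real list \<Rightarrow> nat"
  assumes dl: "0 < dl" and Mnn: "\<And>X. Inv X \<Longrightarrow> 0 \<le> M X"
    and step: "\<And>X. Inv X \<Longrightarrow> \<not> Done X \<Longrightarrow> \<exists>r p. r \<in> P \<and> 1 \<le> p \<and> p \<le> k \<and> Inv (A X r p) \<and>
        ((M (A X r p) \<le> M X \<and> mu (A X r p) < mu X) \<or> M (A X r p) \<le> M X - dl)"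
  shows "Inv X \<Longrightarrow> \<exists>rs ps. set rs \<subseteq> P \<and> valid_prediction k rs ps \<and> Done (alg_final A X rs ps)"
proof -
  define N where "N X = nat \<lfloor>M X / dl\<rfloor>" for X
  have main: "\<And>X. Inv X \<Longrightarrow> N X \<le> n \<Longrightarrow> mu X \<le> m \<Longrightarrow>
      \<exists>rs ps. set rs \<subseteq> P \<and> valid_prediction k rs ps \<and> Done (alg_final A X rs ps)" for n m
  proof (induction n arbitrary: m rule: less_induct)
    case (less n)
    note outerIH = less.IH
    show ?case using less.prems
    proof (induction m arbitrary: X rule: less_induct)
      case (less m X)
      show ?case
      proof (cases "Done X")
        case True
        then show ?thesis by (intro exI[of _ "[]"]) (simp add: valid_prediction_def)
      next
        case False
        obtain r p where rp: "r \<in> P" "1 \<le> p" "p \<le> k" "Inv (A X r p)"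
          "(M (A X r p) \<le> M X \<and> mu (A X r p) < mu X) \<or> M (A X r p) \<le> M X - dl"
          using step[OF less.prems(1) False] by blast
        let ?X1 = "A X r p"
        have ex1: "\<exists>rs ps. set rs \<subseteq> P \<and> valid_prediction k rs ps \<and> Done (alg_final A ?X1 rs ps)"
        proof (cases "M ?X1 \<le> M X \<and> mu ?X1 < mu X")
          case True
          have "M ?X1 / dl \<le> M X / dl" using True dl by (simp add: divide_right_mono)
          then have "N ?X1 \<le> N X" unfolding N_def by (intro nat_mono floor_mono)
          then have "N ?X1 \<le> n" using less.prems(2) by simp
          moreover have "mu ?X1 < m" using True less.prems(3) by simp
          ultimately show ?thesis using less.IH[of "mu ?X1" ?X1] rp(4) by blast
        next
          case False
          then have d: "M ?X1 \<le> M X - dl" using rp(5) by blast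
          have "M ?X1 / dl \<le> (M X - dl) / dl" by (rule divide_right_mono[OF d]) (use dl in simp)
          also have "(M X - dl) / dl = M X / dl - 1" using dl by (simp add: diff_divide_distrib)
          finally have "M ?X1 / dl \<le> M X / dl - 1" .
          then have "\<lfloor>M ?X1 / dl\<rfloor> \<le> \<lfloor>M X / dl - 1\<rfloor>" by (rule floor_mono)
          then have f: "\<lfloor>M ?X1 / dl\<rfloor> \<le> \<lfloor>M X / dl\<rfloor> - 1" by simp
          have "0 \<le> M ?X1" using Mnn[OF rp(4)] .
          then have "0 \<le> \<lfloor>M ?X1 / dl\<rfloor>" using dl by simp
          then have "N ?X1 < N X" unfolding N_def using f by linarith
          then have "N ?X1 < n" using less.prems(2) by simp
          then show ?thesis using outerIH[of "N ?X1" ?X1 "mu ?X1"] rp(4) by blast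
        qed
        then obtain rs ps where "set rs \<subseteq> P" "valid_prediction k rs ps" "Done (alg_final A ?X1 rs ps)" by blast
        then show ?thesis using rp by (intro exI[of _ "r # rs"] exI[of _ "p # ps"]) (auto simp: valid_prediction_def)
      qed
    qed
  qed
  assume "Inv X"
  then show ?thesis using main[of X "N X" "mu X"] by simp
qed



definition lessS :: "real list \<Rightarrow> real list \<Rightarrow> nat set" where
  "lessS Q X = {m. m < length Q \<and> X!m < Q!m}"
definition muL :: "real list \<Rightarrow> real list \<Rightarrow> nat" where
  "muL Q X = (\<Sum>m\<in>lessS Q X. 2 ^ (length Q - m))"
definition Mlq :: "real list \<Rightarrow> real list \<Rightarrow> real" where
  "Mlq Q X = (\<Sum>m<length Q. 2 ^ (length Q - m) * \<bar>X!m - Q!m\<bar>)"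

lemma Mlq_nonneg: "0 \<le> Mlq Q X" unfolding Mlq_def by (intro sum_nonneg) auto

lemma step_L:
  assumes Q: "length Q = k" "1 \<le> k" "\<And>a b. a < b \<Longrightarrow> b < k \<Longrightarrow> Q!a < Q!b"
    and dl: "\<And>m. Suc m < k \<Longrightarrow> dl \<le> Q!(Suc m) - Q!m"
    and lam: "0 \<le> lam" "lam \<le> 1"
    and X: "valid k X" and nl: "\<not> (\<forall>m<k. Q!m \<le> X!m)"
  shows "\<exists>r p. r \<in> set Q \<and> 1 \<le> p \<and> p \<le> k \<and> valid k (ldc lam X r p) \<and>
        ((Mlq Q (ldc lam X r p) \<le> Mlq Q X \<and> muL Q (ldc lam X r p) < muL Q X) \<or> Mlq Q (ldc lam X r p) \<le> Mlq Q X - dl)"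
proof -
  have sx: "sorted X" "length X = k" using X by (auto simp: valid_def)
  have xsm: "\<And>a b. a \<le> b \<Longrightarrow> b < k \<Longrightarrow> X!a \<le> X!b" using sx by (simp add: sorted_nth_mono)
  have fin: "finite (lessS Q X)" unfolding lessS_def by simp
  have ne: "lessS Q X \<noteq> {}" using nl Q unfolding lessS_def by (auto simp: not_le)
  define j where "j = Max (lessS Q X)"
  have jin: "j \<in> lessS Q X" unfolding j_def using fin ne by (rule Max_in)
  then have j: "j < k" "X!j < Q!j" using Q unfolding lessS_def by auto
  have jmax: "\<And>m. j < m \<Longrightarrow> m < k \<Longrightarrow> Q!m \<le> X!m"
  proof -
    fix m assume m: "j < m" "m < k"
    show "Q!m \<le> X!m"
    proof (rule ccontr)
      assume "\<not> Q!m \<le> X!m"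
      then have mi: "m \<in> lessS Q X" using m Q unfolding lessS_def by auto
      have "m \<le> j" unfolding j_def by (rule Max_ge[OF fin mi])
      then show False using m by simp
    qed
  qed
  define r where "r = Q!j"
  have below: "\<And>m. m \<le> j \<Longrightarrow> X!m < r" using xsm[of _ j] j unfolding r_def by fastforce
  have above: "\<And>m. j < m \<Longrightarrow> m < k \<Longrightarrow> r < X!m" using jmax Q(3)[of j] j unfolding r_def by fastforce
  have rQ: "r \<in> set Q" unfolding r_def using j Q by simp
  let ?X1 = "ldc lam X r (Suc j)"
  have v1: "valid k ?X1" using ldc_valid[OF lam(1) X Q(2)] by simp
  have pw: "(2::real) ^ (k - j) = 2 * 2 ^ (k - Suc j)" using j by (simp add: Suc_diff_Suc[symmetric] power_Suc[symmetric] del: power_Suc)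
  have muLj: "muL Q X = 2 ^ (k - j) + (\<Sum>m\<in>lessS Q X - {j}. 2 ^ (length Q - m))"
    unfolding muL_def using sum.remove[OF fin jin] Q by simp
  have res: "(Mlq Q ?X1 \<le> Mlq Q X \<and> muL Q ?X1 < muL Q X) \<or> Mlq Q ?X1 \<le> Mlq Q X - dl"
  proof (rule ldc_cases[OF lam(1) sx Q(2), of r "Suc j"], goal_cases)
    case 1
    then obtain m where m: "m < k" "X!m = r" using sx by (auto simp: in_set_conv_nth)
    have False
    proof (cases "m \<le> j")
      case True then show False using below[OF True] m by simp
    next
      case False then show False using above[of m] m by simp
    qed
    then show ?case ..
  next
    case 2
    then show ?case using below[of 0] by simp
  next
    case 3
    have jk: "j = k - 1"
    proof (rule ccontr)
      assume "j \<noteq> k - 1"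
      then have "r < X!(k-1)" using above[of "k-1"] j by simp
      then show False using 3 by simp
    qed
    have X1: "?X1 = X[j := r]" using 3 jk by simp
    have "Mlq Q ?X1 = Mlq Q X + (2 ^ (k - j) * \<bar>?X1!j - Q!j\<bar> - 2 ^ (k - j) * \<bar>X!j - Q!j\<bar>)"
      unfolding Mlq_def Q(1) by (rule sum_change1) (use j X1 sx in auto)
    then have m1: "Mlq Q ?X1 \<le> Mlq Q X" using X1 sx j unfolding r_def by simp
    have sub: "lessS Q ?X1 \<subseteq> lessS Q X - {j}" using X1 sx j unfolding lessS_def r_def by (auto simp: nth_list_update split: if_splits)
    have "muL Q ?X1 \<le> (\<Sum>m\<in>lessS Q X - {j}. 2 ^ (length Q - m))" unfolding muL_def
      by (rule sum_mono2[OF _ sub]) (use fin in auto)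
    moreover have "(0::nat) < 2 ^ (k - j)" by simp
    ultimately have "muL Q ?X1 < muL Q X" using muLj by linarith
    then show ?case using m1 by simp
  next
    case (4 i d)
    have ij: "i = j"
    proof -
      have "j \<le> i" using 4(4) by simp
      moreover have "i \<le> j" using above[of i] 4(1,2) by (cases "j < i") auto
      ultimately show ?thesis by simp
    qed
    have X1: "?X1 = X[j := X!j + d, Suc j := X!(Suc j) - lam*d]" using 4(9) ij by simp
    have sj: "Suc j < k" using 4(1) ij by simp
    have qs: "Q!(Suc j) \<le> X!(Suc j)" using jmax[of "Suc j"] sj by simp
    define A where "A = \<bar>X!(Suc j) - lam*d - Q!(Suc j)\<bar> - \<bar>X!(Suc j) - Q!(Suc j)\<bar>"
    have "Mlq Q ?X1 = Mlq Q X + (2 ^ (k - j) * \<bar>?X1!j - Q!j\<bar> - 2 ^ (k - j) * \<bar>X!j - Q!j\<bar>)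
        + (2 ^ (k - Suc j) * \<bar>?X1!(Suc j) - Q!(Suc j)\<bar> - 2 ^ (k - Suc j) * \<bar>X!(Suc j) - Q!(Suc j)\<bar>)"
      unfolding Mlq_def Q(1) by (rule sum_change2) (use sj X1 sx in auto)
    also have "2 ^ (k - j) * \<bar>?X1!j - Q!j\<bar> - 2 ^ (k - j) * \<bar>X!j - Q!j\<bar> = - (2 ^ (k - j) * d)"
      using X1 sx sj 4(6) ij j unfolding r_def by (simp add: algebra_simps)
    also have "2 ^ (k - Suc j) * \<bar>?X1!(Suc j) - Q!(Suc j)\<bar> - 2 ^ (k - Suc j) * \<bar>X!(Suc j) - Q!(Suc j)\<bar> = 2 ^ (k - Suc j) * A"
      using X1 sx sj unfolding A_def by (simp add: algebra_simps)
    finally have MLe: "Mlq Q ?X1 = Mlq Q X - 2 ^ (k - j) * d + 2 ^ (k - Suc j) * A" by simp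
    have d0: "0 \<le> d" using 4 by simp
    have lamd: "lam * d \<le> d" using lam d0 by (simp add: mult_left_le_one_le)
    have A1: "A \<le> d"
    proof -
      have "\<bar>(X!(Suc j) - Q!(Suc j)) - lam*d\<bar> \<le> \<bar>X!(Suc j) - Q!(Suc j)\<bar> + \<bar>lam*d\<bar>" by (rule abs_triangle_ineq4)
      then show ?thesis unfolding A_def using lam d0 lamd by (simp add: algebra_simps)
    qed
    have p0: "(0::real) \<le> 2 ^ (k - Suc j)" by simp
    have base: "Mlq Q ?X1 \<le> Mlq Q X - 2 ^ (k - Suc j) * d"
      using MLe mult_left_mono[OF A1 p0] unfolding pw by simp
    show ?case
    proof (cases "X!j + d = r")
      case True
      have "0 \<le> (2::real) ^ (k - Suc j) * d" using d0 by simp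
      then have m1: "Mlq Q ?X1 \<le> Mlq Q X" using base by linarith
      have sub: "lessS Q ?X1 \<subseteq> insert (Suc j) (lessS Q X - {j})"
        using X1 sx sj True unfolding lessS_def r_def by (auto simp: nth_list_update split: if_splits)
      have "muL Q ?X1 \<le> (\<Sum>m\<in>insert (Suc j) (lessS Q X - {j}). 2 ^ (length Q - m))" unfolding muL_def
        by (rule sum_mono2[OF _ sub]) (use fin in auto)
      also have "\<dots> = 2 ^ (k - Suc j) + (\<Sum>m\<in>lessS Q X - {j}. 2 ^ (length Q - m))"
      proof -
        have nsj: "Suc j \<notin> lessS Q X" using qs unfolding lessS_def by auto
        show ?thesis using fin Q(1) nsj by (subst sum.insert) auto
      qed
      also have "\<dots> < muL Q X" unfolding muLj using j
        by (simp add: Suc_diff_Suc[symmetric] del: power_Suc)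
      finally show ?thesis using m1 by simp
    next
      case False
      then have e: "X!(Suc j) - lam*d = r" using 4(8) ij by simp
      have "dl \<le> Q!(Suc j) - Q!j" using dl sj by simp
      also have "\<dots> \<le> lam * d" using e qs unfolding r_def by simp
      also have "\<dots> \<le> d" by (rule lamd)
      finally have dd: "dl \<le> d" .
      have "(1::real) \<le> 2 ^ (k - Suc j)" by simp
      then have "d \<le> 2 ^ (k - Suc j) * d" using d0 by (simp add: mult_le_cancel_right1)
      then show ?thesis using base dd by simp
    qed
  next
    case (5 i d)
    have "Suc i \<le> j" using 5(4) by simp
    then have "X!(Suc i) < r" using below by simp
    then show ?case using 5(3) by simp
  qed
  show ?thesis using rQ v1 res Q j by (intro exI[of _ r] exI[of _ "Suc j"]) auto
qed



definition grS :: "real list \<Rightarrow> real list \<Rightarrow> nat set" where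
  "grS Q X = {m. m < length Q \<and> Q!m < X!m}"
definition muR :: "real list \<Rightarrow> real list \<Rightarrow> nat" where
  "muR Q X = (\<Sum>m\<in>grS Q X. 2 ^ (Suc m))"
definition Mrq :: "real list \<Rightarrow> real list \<Rightarrow> real" where
  "Mrq Q X = (\<Sum>m<length Q. 2 ^ (Suc m) * \<bar>X!m - Q!m\<bar>)"

lemma Mrq_nonneg: "0 \<le> Mrq Q X" unfolding Mrq_def by (intro sum_nonneg) auto

lemma step_R:
  assumes Q: "length Q = k" "1 \<le> k" "\<And>a b. a < b \<Longrightarrow> b < k \<Longrightarrow> Q!a < Q!b"
    and dl: "\<And>m. Suc m < k \<Longrightarrow> dl \<le> Q!(Suc m) - Q!m"
    and lam: "0 \<le> lam" "lam \<le> 1"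
    and X: "valid k X" and nl: "\<forall>m<k. Q!m \<le> X!m" and ne: "X \<noteq> Q"
  shows "\<exists>r p. r \<in> set Q \<and> 1 \<le> p \<and> p \<le> k \<and> (valid k (ldc lam X r p) \<and> (\<forall>m<k. Q!m \<le> (ldc lam X r p)!m)) \<and>
        ((Mrq Q (ldc lam X r p) \<le> Mrq Q X \<and> muR Q (ldc lam X r p) < muR Q X) \<or> Mrq Q (ldc lam X r p) \<le> Mrq Q X - dl)"
proof -
  have sx: "sorted X" "length X = k" using X by (auto simp: valid_def)
  have xsm: "\<And>a b. a \<le> b \<Longrightarrow> b < k \<Longrightarrow> X!a \<le> X!b" using sx by (simp add: sorted_nth_mono)
  have fin: "finite (grS Q X)" unfolding grS_def by simp
  have gne: "grS Q X \<noteq> {}"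
  proof
    assume e: "grS Q X = {}"
    have "X = Q"
    proof (rule nth_equalityI)
      show "length X = length Q" using sx Q by simp
      fix m assume "m < length X"
      then have "m < k" using sx by simp
      then show "X!m = Q!m" using e nl Q unfolding grS_def by force
    qed
    then show False using ne by simp
  qed
  define j where "j = Min (grS Q X)"
  have jin: "j \<in> grS Q X" unfolding j_def using fin gne by (rule Min_in)
  then have j: "j < k" "Q!j < X!j" using Q unfolding grS_def by auto
  have jmin: "\<And>m. m < j \<Longrightarrow> X!m = Q!m"
  proof -
    fix m assume m: "m < j"
    have "\<not> Q!m < X!m"
    proof
      assume "Q!m < X!m"
      then have mi: "m \<in> grS Q X" using m j Q unfolding grS_def by auto
      have "j \<le> m" unfolding j_def by (rule Min_le[OF fin mi])
      then show False using m by simp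
    qed
    moreover have "Q!m \<le> X!m" using nl m j by simp
    ultimately show "X!m = Q!m" by simp
  qed
  define r where "r = Q!j"
  have below: "\<And>m. m < j \<Longrightarrow> X!m < r" using jmin Q(3) j unfolding r_def by simp
  have above: "\<And>m. j \<le> m \<Longrightarrow> m < k \<Longrightarrow> r < X!m" using xsm[of j] j unfolding r_def by fastforce
  have rQ: "r \<in> set Q" unfolding r_def using j Q by simp
  let ?X1 = "ldc lam X r (Suc j)"
  have v1: "valid k ?X1" using ldc_valid[OF lam(1) X Q(2)] by simp
  have muRj: "muR Q X = 2 ^ (Suc j) + (\<Sum>m\<in>grS Q X - {j}. 2 ^ (Suc m))"
    unfolding muR_def using sum.remove[OF fin jin] by simp
  have res: "(\<forall>m<k. Q!m \<le> ?X1!m) \<and> ((Mrq Q ?X1 \<le> Mrq Q X \<and> muR Q ?X1 < muR Q X) \<or> Mrq Q ?X1 \<le> Mrq Q X - dl)"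
  proof (rule ldc_cases[OF lam(1) sx Q(2), of r "Suc j"], goal_cases)
    case 1
    then obtain m where m: "m < k" "X!m = r" using sx by (auto simp: in_set_conv_nth)
    have False
    proof (cases "m < j")
      case True then show False using below[OF True] m by simp
    next
      case False then show False using above[of m] m by simp
    qed
    then show ?case ..
  next
    case 2
    have j0: "j = 0"
    proof (rule ccontr)
      assume "j \<noteq> 0"
      then have "X!0 < r" using below[of 0] by simp
      then show False using 2 by simp
    qed
    have X1: "?X1 = X[0 := r]" using 2 by simp
    have "Mrq Q ?X1 = Mrq Q X + (2 ^ (Suc 0) * \<bar>?X1!0 - Q!0\<bar> - 2 ^ (Suc 0) * \<bar>X!0 - Q!0\<bar>)"
      unfolding Mrq_def Q(1) by (rule sum_change1) (use j X1 sx in auto)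
    then have m1: "Mrq Q ?X1 \<le> Mrq Q X" using X1 sx j j0 unfolding r_def by simp
    have sub: "grS Q ?X1 \<subseteq> grS Q X - {j}" using X1 sx j j0 unfolding grS_def r_def
      by (auto simp: nth_list_update split: if_splits)
    have "muR Q ?X1 \<le> (\<Sum>m\<in>grS Q X - {j}. 2 ^ (Suc m))" unfolding muR_def
      by (rule sum_mono2[OF _ sub]) (use fin in auto)
    moreover have "(0::nat) < 2 ^ (Suc j)" by simp
    ultimately have "muR Q ?X1 < muR Q X" using muRj by linarith
    moreover have "\<forall>m<k. Q!m \<le> ?X1!m" using X1 nl sx j0 unfolding r_def by (auto simp: nth_list_update)
    ultimately show ?case using m1 by simp
  next
    case 3
    have "r < X!(k-1)" using above[of "k-1"] j by simp
    then show ?case using 3 by simp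
  next
    case (4 i d)
    have "j \<le> i" using 4(4) by simp
    then have "r < X!i" using above 4(1) by simp
    then show ?case using 4(2) by simp
  next
    case (5 i d)
    have ij: "Suc i = j"
    proof -
      have "i < j" using 5(4) by simp
      moreover have "j \<le> Suc i" using below[of "Suc i"] 5(3) by (cases "Suc i < j") auto
      ultimately show ?thesis by simp
    qed
    have X1: "?X1 = X[i := X!i + lam*d, Suc i := X!(Suc i) - d]" using 5(9) by simp
    have sj: "Suc i < k" using 5(1) by simp
    have xi: "X!i = Q!i" using jmin[of i] ij by simp
    have d0: "0 \<le> d" using 5 by simp
    have lamd: "lam * d \<le> d" using lam d0 by (simp add: mult_left_le_one_le)
    have ld0: "0 \<le> lam * d" using lam d0 by simp
    have "Mrq Q ?X1 = Mrq Q X + (2 ^ (Suc i) * \<bar>?X1!i - Q!i\<bar> - 2 ^ (Suc i) * \<bar>X!i - Q!i\<bar>)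
        + (2 ^ (Suc (Suc i)) * \<bar>?X1!(Suc i) - Q!(Suc i)\<bar> - 2 ^ (Suc (Suc i)) * \<bar>X!(Suc i) - Q!(Suc i)\<bar>)"
      unfolding Mrq_def Q(1) by (rule sum_change2) (use sj X1 sx in auto)
    also have "2 ^ (Suc i) * \<bar>?X1!i - Q!i\<bar> - 2 ^ (Suc i) * \<bar>X!i - Q!i\<bar> = 2 ^ (Suc i) * (lam * d)"
      using X1 sx sj xi ld0 by simp
    also have "2 ^ (Suc (Suc i)) * \<bar>?X1!(Suc i) - Q!(Suc i)\<bar> - 2 ^ (Suc (Suc i)) * \<bar>X!(Suc i) - Q!(Suc i)\<bar> = - (2 * 2 ^ (Suc i) * d)"
    proof -
      have "Q!(Suc i) \<le> X!(Suc i) - d" using 5(7) ij unfolding r_def by simp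
      then show ?thesis using X1 sx sj d0 by (simp add: algebra_simps)
    qed
    finally have Me: "Mrq Q ?X1 = Mrq Q X + 2 ^ (Suc i) * (lam * d) - 2 * 2 ^ (Suc i) * d" by simp
    have p0: "(0::real) \<le> 2 ^ (Suc i)" by simp
    have base: "Mrq Q ?X1 \<le> Mrq Q X - 2 ^ (Suc i) * d"
      using Me mult_left_mono[OF lamd p0] by simp
    have nl1: "\<forall>m<k. Q!m \<le> ?X1!m"
    proof (intro allI impI)
      fix m assume m: "m < k"
      show "Q!m \<le> ?X1!m"
      proof (cases "m = i")
        case True then show ?thesis using X1 sx sj xi ld0 by simp
      next
        case F: False
        show ?thesis
        proof (cases "m = Suc i")
          case True then show ?thesis using X1 sx sj 5(7) ij unfolding r_def by simp
        next
          case False then show ?thesis using X1 F nl m by simp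
        qed
      qed
    qed
    have "(Mrq Q ?X1 \<le> Mrq Q X \<and> muR Q ?X1 < muR Q X) \<or> Mrq Q ?X1 \<le> Mrq Q X - dl"
    proof (cases "X!(Suc i) - d = r")
      case True
      have "0 \<le> (2::real) ^ (Suc i) * d" using d0 by simp
      then have m1: "Mrq Q ?X1 \<le> Mrq Q X" using base by linarith
      have sub: "grS Q ?X1 \<subseteq> insert i (grS Q X - {j})"
        using X1 sx sj True ij unfolding grS_def r_def by (auto simp: nth_list_update split: if_splits)
      have "muR Q ?X1 \<le> (\<Sum>m\<in>insert i (grS Q X - {j}). 2 ^ (Suc m))" unfolding muR_def
        by (rule sum_mono2[OF _ sub]) (use fin in auto)
      also have "\<dots> = 2 ^ (Suc i) + (\<Sum>m\<in>grS Q X - {j}. 2 ^ (Suc m))"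
      proof -
        have nsi: "i \<notin> grS Q X" using xi unfolding grS_def by auto
        show ?thesis using fin nsi by (subst sum.insert) auto
      qed
      also have "\<dots> < muR Q X" unfolding muRj using ij[symmetric] by simp
      finally show ?thesis using m1 by simp
    next
      case False
      then have e: "X!i + lam*d = r" using 5(8) by simp
      have "dl \<le> Q!(Suc i) - Q!i" using dl sj by simp
      also have "\<dots> = lam * d" using e xi ij unfolding r_def by simp
      also have "\<dots> \<le> d" by (rule lamd)
      finally have dd: "dl \<le> d" .
      have "(1::real) \<le> 2 ^ (Suc i)" by (rule one_le_power) simp
      then have "d \<le> 2 ^ (Suc i) * d" using d0 by (simp add: mult_le_cancel_right1)
      then show ?thesis using base dd by simp
    qed
    then show ?case using nl1 by simp
  qed
  show ?thesis using rQ v1 res Q j by (intro exI[of _ r] exI[of _ "Suc j"]) auto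
qed



lemma alg_final_append:
  "length rs1 = length ps1 \<Longrightarrow> alg_final A C (rs1 @ rs2) (ps1 @ ps2) = alg_final A (alg_final A C rs1 ps1) rs2 ps2"
proof (induction rs1 arbitrary: C ps1)
  case Nil then show ?case by simp
next
  case (Cons r rs1)
  then obtain p ps1' where "ps1 = p # ps1'" by (cases ps1) auto
  then show ?case using Cons by simp
qed

lemma ldc_erasable2:
  assumes lam: "0 \<le> lam" "lam \<le> 1" and k: "1 \<le> k"
  shows "erasable k (ldc lam)"
  unfolding erasable_def
proof (intro allI impI)
  fix P :: "real set" and C assume a: "finite P \<and> card P = k \<and> valid_config k C"
  define Q where "Q = sorted_list_of_set P"
  have lQ: "length Q = k" using a unfolding Q_def by simp
  have sQ: "set Q = P" using a unfolding Q_def by simp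
  have stQ: "sorted_wrt (<) Q" unfolding Q_def by simp
  have Qlt: "\<And>a b. a < b \<Longrightarrow> b < k \<Longrightarrow> Q!a < Q!b" using stQ lQ by (simp add: sorted_wrt_iff_nth_less)
  define G where "G = insert 1 ((\<lambda>m. Q!(Suc m) - Q!m) ` {m. Suc m < k})"
  define dl where "dl = Min G"
  have "finite {m. Suc m < k}" by (rule finite_subset[of _ "{..<k}"]) auto
  then have fG: "finite G" unfolding G_def by simp
  have Gpos: "\<forall>x\<in>G. 0 < x" unfolding G_def using Qlt by auto
  have dl0: "0 < dl" unfolding dl_def using fG Gpos by (simp add: Min_gr_iff G_def)
  have dlm: "\<And>m. Suc m < k \<Longrightarrow> dl \<le> Q!(Suc m) - Q!m"
    unfolding dl_def using fG by (intro Min_le) (auto simp: G_def)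
  have vC: "valid k C" using a by (simp add: valid_iff)
  obtain rs1 ps1 where R1: "set rs1 \<subseteq> set Q" "valid_prediction k rs1 ps1"
      "valid k (alg_final (ldc lam) C rs1 ps1) \<and> (\<forall>m<k. Q!m \<le> (alg_final (ldc lam) C rs1 ps1)!m)"
  proof -
    have "\<exists>rs ps. set rs \<subseteq> set Q \<and> valid_prediction k rs ps \<and>
        (\<lambda>X. valid k X \<and> (\<forall>m<k. Q!m \<le> X!m)) (alg_final (ldc lam) C rs ps)"
    proof (rule descent[where Inv="valid k" and M="Mlq Q" and mu="muL Q" and dl=dl])
      show "0 < dl" by (rule dl0)
      show "\<And>X. valid k X \<Longrightarrow> 0 \<le> Mlq Q X" by (rule Mlq_nonneg)
      show "valid k C" by (rule vC)
      fix X assume "valid k X" "\<not> (valid k X \<and> (\<forall>m<k. Q!m \<le> X!m))"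
      then show "\<exists>r p. r \<in> set Q \<and> 1 \<le> p \<and> p \<le> k \<and> valid k (ldc lam X r p) \<and>
        ((Mlq Q (ldc lam X r p) \<le> Mlq Q X \<and> muL Q (ldc lam X r p) < muL Q X) \<or> Mlq Q (ldc lam X r p) \<le> Mlq Q X - dl)"
        using step_L[OF lQ k Qlt dlm lam] by blast
    qed
    then show ?thesis using that by blast
  qed
  let ?X1 = "alg_final (ldc lam) C rs1 ps1"
  obtain rs2 ps2 where R2: "set rs2 \<subseteq> set Q" "valid_prediction k rs2 ps2"
      "alg_final (ldc lam) ?X1 rs2 ps2 = Q"
  proof -
    have "\<exists>rs ps. set rs \<subseteq> set Q \<and> valid_prediction k rs ps \<and>
        (\<lambda>X. X = Q) (alg_final (ldc lam) ?X1 rs ps)"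
    proof (rule descent[where Inv="\<lambda>X. valid k X \<and> (\<forall>m<k. Q!m \<le> X!m)" and M="Mrq Q" and mu="muR Q" and dl=dl])
      show "0 < dl" by (rule dl0)
      show "\<And>X. valid k X \<and> (\<forall>m<k. Q!m \<le> X!m) \<Longrightarrow> 0 \<le> Mrq Q X" by (rule Mrq_nonneg)
      show "valid k ?X1 \<and> (\<forall>m<k. Q!m \<le> ?X1!m)" by (rule R1(3))
      fix X assume "valid k X \<and> (\<forall>m<k. Q!m \<le> X!m)" "\<not> (X = Q)"
      then show "\<exists>r p. r \<in> set Q \<and> 1 \<le> p \<and> p \<le> k \<and> (valid k (ldc lam X r p) \<and> (\<forall>m<k. Q!m \<le> (ldc lam X r p)!m)) \<and>
        ((Mrq Q (ldc lam X r p) \<le> Mrq Q X \<and> muR Q (ldc lam X r p) < muR Q X) \<or> Mrq Q (ldc lam X r p) \<le> Mrq Q X - dl)"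
        using step_R[OF lQ k Qlt dlm lam] by blast
    qed
    then show ?thesis using that by blast
  qed
  have lp1: "length rs1 = length ps1" using R1(2) by (simp add: valid_prediction_def)
  show "\<exists>rs ps. set rs \<subseteq> P \<and> valid_prediction k rs ps \<and> alg_final (ldc lam) C rs ps = sorted_list_of_set P"
  proof (intro exI conjI)
    show "set (rs1 @ rs2) \<subseteq> P" using R1(1) R2(1) sQ by auto
    show "valid_prediction k (rs1 @ rs2) (ps1 @ ps2)" using R1(2) R2(2) by (auto simp: valid_prediction_def)
    show "alg_final (ldc lam) C (rs1 @ rs2) (ps1 @ ps2) = sorted_list_of_set P"
      using alg_final_append[OF lp1] R2(3) Q_def by simp
  qed
qed


theorem theorem1:
  fixes k :: nat and lam :: real
  assumes "1 \<le> k" and "0 \<le> lam" and "lam \<le> 1"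
  shows "\<exists>A :: mc_alg. memory_constrained k A \<and>
           (\<exists>c :: real list \<Rightarrow> real. (\<forall>C. 0 \<le> c C) \<and>
              (\<forall>C0 rs ps. valid_config k C0 \<and> valid_prediction k rs ps \<longrightarrow>
                 alg_cost A C0 rs ps
                   \<le> LA_bound lam k (OPT k C0 rs) (pred_error k C0 rs ps) + c C0))"
proof (intro exI conjI)
  show "memory_constrained k (ldc lam)"
    unfolding memory_constrained_def serves_def
    using ldc_valid[OF assms(2) _ assms(1)] ldc_erasable2[OF assms(2,3,1)] by (simp add: valid_iff)
  define c where "c C = max 0 (Psi lam k C) + max 0 (Psi (1/lam) k C)" for C
  show "\<forall>C. 0 \<le> c C" unfolding c_def by simp
  show "\<forall>C0 rs ps. valid_config k C0 \<and> valid_prediction k rs ps \<longrightarrow>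
       alg_cost (ldc lam) C0 rs ps \<le> LA_bound lam k (OPT k C0 rs) (pred_error k C0 rs ps) + c C0"
  proof (intro allI impI)
    fix C0 rs ps assume a: "valid_config k C0 \<and> valid_prediction k rs ps"
    have v: "valid k C0" using a by (simp add: valid_iff)
    have e: "OPT k C0 rs + pred_error k C0 rs ps = ftp_cost C0 rs ps" by (simp add: pred_error_def)
    have c1: "alg_cost (ldc lam) C0 rs ps \<le> alpha lam k * ftp_cost C0 rs ps + c C0"
    proof -
      have "alg_cost (ldc lam) C0 rs ps \<le> alpha lam k * ftp_cost C0 rs ps + Phi lam k C0 C0"
        by (rule cons_run[OF assms(2,3,1) v v]) (use a in simp)
      moreover have "Phi lam k C0 C0 \<le> c C0" unfolding Phi_self c_def by simp
      ultimately show ?thesis by simp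
    qed
    show "alg_cost (ldc lam) C0 rs ps \<le> LA_bound lam k (OPT k C0 rs) (pred_error k C0 rs ps) + c C0"
    proof (cases "lam = 0")
      case True
      then show ?thesis using c1 e by (simp add: LA_bound_def)
    next
      case False
      then have l: "0 < lam" using assms by simp
      have c2: "alg_cost (ldc lam) C0 rs ps \<le> beta lam k * OPT k C0 rs + c C0"
      proof -
        have "alg_cost (ldc lam) C0 rs ps \<le> beta lam k * OPT k C0 rs + Psi (1/lam) k C0"
          by (rule OPT_bound[OF l assms(3,1) v])
        moreover have "Psi (1/lam) k C0 \<le> c C0" unfolding c_def by simp
        ultimately show ?thesis by simp
      qed
      show ?thesis using c1 c2 e False by (simp add: LA_bound_def)
    qed
  qed
qed


end
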